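(* Let $\varrho$ be a proximate order of order $\rho>0$ and $\sigma\ge0$. If $f\in A_{\varrho,\sigma+0}$ has Taylor expansion $f(x)=\sum_{\ell=0}^\infty x^\ell a_\ell$, then the partial sums $\sum_{\ell\le N}x^\ell a_\ell$ converge to $f$ in $A_{\varrho,\sigma+0}$ as $N\to\infty$. In particular, the set of polynomials $\sum_{\ell=0}^M x^\ell a_\ell$ ($a_\ell\in\mathbb{R}_n$) is dense in $A_{\varrho,+0}$ and dense in $A_\varrho$.
   Context: $\mathbb{R}_n$ is the real Clifford algebra generated by $e_1,\dots,e_n$ with $e_ie_j=-e_je_i$ ($i\ne j$), $e_i^2=-1$, with Euclidean norm $|a|^2=\sum_Aa_A^2$. Paravectors $x=x_0+\sum x_\ell e_\ell$ are identified with $\mathbb{R}^{n+1}$; $\mathbb{S}=\{\sum x_\ell e_\ell:\sum x_\ell^2=1\}$. $\mathcal{SM}_L(\mathbb{R}^{n+1})$ is the set of entire left slice monogenic functions: $f(u+jv)=f_0(u,v)+jf_1(u,v)$ for all $u,v\in\mathbb{R}$, $j\in\mathbb{S}$, with $f_0,f_1:\mathbb{R}^2\to\mathbb{R}_n$ continuously differentiable, $f_0$ even and $f_1$ odd in $v$, $\partial_uf_0=\partial_vf_1$, $\partial_vf_0=-\partial_uf_1$; each such $f$ equals its everywhere convergent Taylor series $\sum x^\ell a_\ell$ with $a_\ell=\partial_{x_0}^\ell f(0)/\ell!$. A proximate order is a differentiable $\varrho:[0,\infty)\to[0,\infty)$ with $\lim_{r\to\infty}\varrho(r)=\rho>0$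 and $\lim_{r\to\infty}\varrho'(r)r\ln r=0$. For $\sigma>0$, $A_{\varrho,\sigma}=\{f\in\mathcal{SM}_L(\mathbb{R}^{n+1}):\|f\|_{\varrho,\sigma}:=\sup_x|f(x)|e^{-\sigma|x|^{\varrho(|x|)}}<\infty\}$. $A_\varrho=\bigcup_{\sigma>0}A_{\varrho,\sigma}$ with the inductive limit topology (a sequence converges iff it and its limit lie in some $A_{\varrho,\sigma}$ and it converges in $\|\cdot\|_{\varrho,\sigma}$). For $\sigma\ge0$, $A_{\varrho,\sigma+0}=\bigcap_{\epsilon>0}A_{\varrho,\sigma+\epsilon}$, where convergence means convergence in $\|\cdot\|_{\varrho,\sigma+\epsilon}$ for every $\epsilon>0$; $A_{\varrho,+0}:=A_{\varrho,0+0}$. *)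

theory Defs
  imports "HOL-Analysis.Analysis"
begin

text \<open>An element of R_n is represented by its coefficient function A \<mapsto> a_A on
  subsets A of {1..n} (basis element e_A = e_{a1}...e_{ak}, a1<...<ak).\<close>

type_synonym cl = "nat set \<Rightarrow> real"

definition clifford :: "nat \<Rightarrow> cl set" where
  "clifford n = {a. \<forall>A. a A \<noteq> 0 \<longrightarrow> A \<subseteq> {1..n}}"

text \<open>Sign in e_A e_B = sign A B * e_(A symdiff B): one factor -1 for every
  transposition (pairs i in A, j in B with j < i) and one for each e_i^2 = -1.\<close>
definition cl_sign :: "nat set \<Rightarrow> nat set \<Rightarrow> real" where
  "cl_sign A B = (-1) ^ (card {(i, j). i \<in> A \<and> j \<in> B \<and> j < i} + card (A \<inter> B))"

definition cl_mult :: "nat \<Rightarrow> cl \<Rightarrow> cl \<Rightarrow> cl" where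
  "cl_mult n a b = (\<lambda>C. \<Sum>A\<in>Pow {1..n}. \<Sum>B\<in>Pow {1..n}.
      if (A - B) \<union> (B - A) = C then cl_sign A B * a A * b B else 0)"

definition cl_add :: "cl \<Rightarrow> cl \<Rightarrow> cl" where
  "cl_add a b = (\<lambda>A. a A + b A)"

definition cl_scale :: "real \<Rightarrow> cl \<Rightarrow> cl" where
  "cl_scale r a = (\<lambda>A. r * a A)"

definition cl_real :: "real \<Rightarrow> cl" where
  "cl_real r = (\<lambda>A. if A = {} then r else 0)"

definition cl_norm :: "nat \<Rightarrow> cl \<Rightarrow> real" where
  "cl_norm n a = sqrt (\<Sum>A\<in>Pow {1..n}. (a A)\<^sup>2)"

fun cl_pow :: "nat \<Rightarrow> cl \<Rightarrow> nat \<Rightarrow> cl" where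
  "cl_pow n x 0 = cl_real 1"
| "cl_pow n x (Suc k) = cl_mult n (cl_pow n x k) x"

text \<open>Paravectors x = x_0 + sum x_l e_l (identified with R^(n+1)); the sphere S.\<close>
definition paravectors :: "nat \<Rightarrow> cl set" where
  "paravectors n = {x \<in> clifford n. \<forall>A. x A \<noteq> 0 \<longrightarrow> card A \<le> 1}"

definition cl_sphere :: "nat \<Rightarrow> cl set" where
  "cl_sphere n = {x \<in> paravectors n. x {} = 0 \<and> cl_norm n x = 1}"

definition slice_monogenic :: "nat \<Rightarrow> (cl \<Rightarrow> cl) \<Rightarrow> bool" where
  "slice_monogenic n f \<longleftrightarrow>
    (\<exists>(f0 :: real \<times> real \<Rightarrow> cl) (f1 :: real \<times> real \<Rightarrow> cl)
       (D0u :: real \<times> real \<Rightarrow> cl) (D0v :: real \<times> real \<Rightarrow> cl)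
       (D1u :: real \<times> real \<Rightarrow> cl) (D1v :: real \<times> real \<Rightarrow> cl).
      (\<forall>p. f0 p \<in> clifford n \<and> f1 p \<in> clifford n) \<and>
      \<comment> \<open>continuous differentiability (componentwise), with partial derivatives D\<close>
      (\<forall>A p. ((\<lambda>q. f0 q A) has_derivative (\<lambda>(h, k). h * D0u p A + k * D0v p A)) (at p)) \<and>
      (\<forall>A p. ((\<lambda>q. f1 q A) has_derivative (\<lambda>(h, k). h * D1u p A + k * D1v p A)) (at p)) \<and>
      (\<forall>A. continuous_on UNIV (\<lambda>p. D0u p A) \<and> continuous_on UNIV (\<lambda>p. D0v p A) \<and>
           continuous_on UNIV (\<lambda>p. D1u p A) \<and> continuous_on UNIV (\<lambda>p. D1v p A)) \<and>
      \<comment> \<open>f0 even, f1 odd in v\<close>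
      (\<forall>u v. f0 (u, - v) = f0 (u, v) \<and> f1 (u, - v) = cl_scale (-1) (f1 (u, v))) \<and>
      \<comment> \<open>Cauchy-Riemann system\<close>
      (\<forall>p. D0u p = D1v p \<and> D0v p = cl_scale (-1) (D1u p)) \<and>
      \<comment> \<open>f(u + j v) = f0(u,v) + j f1(u,v)\<close>
      (\<forall>u v j. j \<in> cl_sphere n \<longrightarrow>
          f (cl_add (cl_real u) (cl_scale v j)) = cl_add (f0 (u, v)) (cl_mult n j (f1 (u, v)))))"

definition proximate_order :: "(real \<Rightarrow> real) \<Rightarrow> real \<Rightarrow> bool" where
  "proximate_order rh \<rho> \<longleftrightarrow> \<rho> > 0 \<and>
     (\<forall>r\<ge>0. rh r \<ge> 0 \<and> rh differentiable (at r within {0..})) \<and>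
     (rh \<longlongrightarrow> \<rho>) at_top \<and>
     ((\<lambda>r. deriv rh r * r * ln r) \<longlongrightarrow> 0) at_top"

definition weight :: "nat \<Rightarrow> (real \<Rightarrow> real) \<Rightarrow> real \<Rightarrow> cl \<Rightarrow> real" where
  "weight n rh \<sigma> x = exp (- \<sigma> * (cl_norm n x powr rh (cl_norm n x)))"

definition in_A :: "nat \<Rightarrow> (real \<Rightarrow> real) \<Rightarrow> real \<Rightarrow> (cl \<Rightarrow> cl) \<Rightarrow> bool" where
  "in_A n rh \<sigma> f \<longleftrightarrow> slice_monogenic n f \<and>
     bdd_above ((\<lambda>x. cl_norm n (f x) * weight n rh \<sigma> x) ` paravectors n)"

definition A_norm :: "nat \<Rightarrow> (real \<Rightarrow> real) \<Rightarrow> real \<Rightarrow> (cl \<Rightarrow> cl) \<Rightarrow> real" where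
  "A_norm n rh \<sigma> f = (SUP x\<in>paravectors n. cl_norm n (f x) * weight n rh \<sigma> x)"

definition in_A_plus :: "nat \<Rightarrow> (real \<Rightarrow> real) \<Rightarrow> real \<Rightarrow> (cl \<Rightarrow> cl) \<Rightarrow> bool" where
  "in_A_plus n rh \<sigma> f \<longleftrightarrow> (\<forall>\<epsilon>>0. in_A n rh (\<sigma> + \<epsilon>) f)"

definition in_A_union :: "nat \<Rightarrow> (real \<Rightarrow> real) \<Rightarrow> (cl \<Rightarrow> cl) \<Rightarrow> bool" where
  "in_A_union n rh f \<longleftrightarrow> (\<exists>\<sigma>>0. in_A n rh \<sigma> f)"

definition fun_diff :: "(cl \<Rightarrow> cl) \<Rightarrow> (cl \<Rightarrow> cl) \<Rightarrow> (cl \<Rightarrow> cl)" where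
  "fun_diff g f = (\<lambda>x A. g x A - f x A)"

definition conv_A_plus ::
  "nat \<Rightarrow> (real \<Rightarrow> real) \<Rightarrow> real \<Rightarrow> (nat \<Rightarrow> cl \<Rightarrow> cl) \<Rightarrow> (cl \<Rightarrow> cl) \<Rightarrow> bool" where
  "conv_A_plus n rh \<sigma> g f \<longleftrightarrow> (\<forall>k. in_A_plus n rh \<sigma> (g k)) \<and> in_A_plus n rh \<sigma> f \<and>
     (\<forall>\<epsilon>>0. (\<lambda>k. A_norm n rh (\<sigma> + \<epsilon>) (fun_diff (g k) f)) \<longlonglongrightarrow> 0)"

definition conv_A_union ::
  "nat \<Rightarrow> (real \<Rightarrow> real) \<Rightarrow> (nat \<Rightarrow> cl \<Rightarrow> cl) \<Rightarrow> (cl \<Rightarrow> cl) \<Rightarrow> bool" where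
  "conv_A_union n rh g f \<longleftrightarrow> (\<exists>\<sigma>>0. (\<forall>k. in_A n rh \<sigma> (g k)) \<and> in_A n rh \<sigma> f \<and>
     (\<lambda>k. A_norm n rh \<sigma> (fun_diff (g k) f)) \<longlonglongrightarrow> 0)"

definition poly_fun :: "nat \<Rightarrow> (nat \<Rightarrow> cl) \<Rightarrow> nat \<Rightarrow> cl \<Rightarrow> cl" where
  "poly_fun n a M = (\<lambda>x A. \<Sum>l\<le>M. cl_mult n (cl_pow n x l) (a l) A)"

definition is_cl_poly :: "nat \<Rightarrow> (cl \<Rightarrow> cl) \<Rightarrow> bool" where
  "is_cl_poly n p \<longleftrightarrow> (\<exists>a M. (\<forall>l. a l \<in> clifford n) \<and> p = poly_fun n a M)"

end

theory Submission
  imports Defs "HOL-Complex_Analysis.Complex_Analysis"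
begin

lemma coeff_cauchy:
  fixes c :: "nat \<Rightarrow> complex"
  assumes summ: "\<And>z. summable (\<lambda>l. c l * z ^ l)" and r: "r > 0"
    and bnd: "\<And>z. norm z = r \<Longrightarrow> norm (\<Sum>l. c l * z ^ l) \<le> B"
  shows "norm (c m) \<le> B / r ^ m"
proof -
  define F where "F = Abs_fps c"
  have rad: "fps_conv_radius F \<ge> ereal (r + 1)"
  proof -
    have "conv_radius c \<ge> norm (of_real (r+1) :: complex)" by (rule conv_radius_geI[OF summ])
    thus ?thesis using r by (simp add: F_def fps_conv_radius_def)
  qed
  have lt: "ereal (norm z) < fps_conv_radius F" if "norm z \<le> r" for z :: complex
  proof -
    have "ereal (norm z) < ereal (r + 1)" using that by simp
    thus ?thesis using rad by (rule less_le_trans)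
  qed
  have sub: "cball (0::complex) r \<subseteq> eball 0 (fps_conv_radius F)"
  proof (rule subsetI)
    fix z :: complex assume "z \<in> cball 0 r"
    hence "norm z \<le> r" by simp
    hence "ereal (norm z) < fps_conv_radius F" by (rule lt)
    thus "z \<in> eball 0 (fps_conv_radius F)" unfolding eball_def by simp
  qed
  have pos: "fps_conv_radius F > 0" using rad r
    by (metis ereal_less(2) add_pos_pos less_le_trans zero_less_one)
  have nth: "fps_nth F m = (deriv ^^ m) (eval_fps F) 0 / fact m"
    by (rule fps_nth_fps_expansion[OF eval_fps_has_fps_expansion[OF pos]])
  have "norm ((deriv ^^ m) (eval_fps F) 0) \<le> fact m * B / r ^ m"
  proof (rule Cauchy_inequality)
    show "eval_fps F holomorphic_on ball 0 r"
      by (rule holomorphic_on_eval_fps) (use sub in auto)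
    show "continuous_on (cball 0 r) (eval_fps F)"
      by (rule continuous_on_subset[OF continuous_on_eval_fps sub])
    show "0 < r" by fact
    fix x :: complex assume "norm (0 - x) = r"
    thus "norm (eval_fps F x) \<le> B" using bnd[of x] by (simp add: eval_fps_def F_def)
  qed
  hence "norm (fps_nth F m) \<le> B / r ^ m" unfolding nth
    by (simp add: norm_divide field_simps)
  thus ?thesis by (simp add: F_def)
qed

abbreviation "PS n \<equiv> Pow {1..(n::nat)}"

lemma cl_mult_expand:
  "cl_mult n a b C = (\<Sum>A\<in>PS n. \<Sum>B\<in>PS n. (if (A - B) \<union> (B - A) = C then cl_sign A B else 0) * a A * b B)"
  unfolding cl_mult_def by (intro sum.cong refl) auto

lemma cl_mult_add_right: "cl_mult n a (\<lambda>C. b C + c C) C = cl_mult n a b C + cl_mult n a c C"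
  unfolding cl_mult_expand by (simp add: algebra_simps sum.distrib)

lemma cl_mult_scale_right: "cl_mult n a (\<lambda>C. r * b C) C = r * cl_mult n a b C"
  unfolding cl_mult_expand by (simp add: algebra_simps sum_distrib_left)

lemma cl_mult_add_left: "cl_mult n (\<lambda>C. b C + c C) a C = cl_mult n b a C + cl_mult n c a C"
  unfolding cl_mult_expand by (simp add: algebra_simps sum.distrib)

lemma cl_mult_scale_left: "cl_mult n (\<lambda>C. r * b C) a C = r * cl_mult n b a C"
  unfolding cl_mult_expand by (simp add: algebra_simps sum_distrib_left)

lemma cl_mult_sum_right: "finite S \<Longrightarrow> cl_mult n a (\<lambda>C. \<Sum>l\<in>S. b l C) C = (\<Sum>l\<in>S. cl_mult n a (b l) C)"
  unfolding cl_mult_expand by (simp add: sum_distrib_left sum_distrib_right sum.swap[of _ S] algebra_simps)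

lemma cl_mult_clifford: "cl_mult n a b \<in> clifford n"
  unfolding clifford_def
proof (safe, rule ccontr)
  fix C x assume ne: "cl_mult n a b C \<noteq> 0" and "x \<in> C" and "x \<notin> {1..n}"
  hence "\<not> C \<subseteq> {1..n}" by auto
  hence "cl_mult n a b C = 0" unfolding cl_mult_def
    by (intro sum.neutral ballI) auto
  thus False using ne by simp
qed

lemma cl_real_clifford: "cl_real r \<in> clifford n"
  unfolding clifford_def cl_real_def by auto

lemma cl_sign_empty1: "cl_sign {} B = 1" by (simp add: cl_sign_def)
lemma cl_sign_empty2: "cl_sign B {} = 1" by (simp add: cl_sign_def)

lemma sum_collapse: "finite S \<Longrightarrow> (\<Sum>B\<in>S. if B = C then g B else 0) = (if C \<in> S then g C else 0)"
  by (simp add: sum.delta')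

lemma cl_mult_real_left:
  assumes "b \<in> clifford n" shows "cl_mult n (cl_real r) b C = r * b C"
proof -
  have "cl_mult n (cl_real r) b C = (\<Sum>A\<in>PS n. if A = {} then (\<Sum>B\<in>PS n. (if (A - B) \<union> (B - A) = C then cl_sign A B else 0) * r * b B) else 0)"
    unfolding cl_mult_expand cl_real_def by (intro sum.cong refl) auto
  also have "\<dots> = (\<Sum>B\<in>PS n. (if (B::nat set) = C then cl_sign {} B else 0) * r * b B)"
    by (subst sum_collapse) auto
  also have "\<dots> = (\<Sum>B\<in>PS n. (if B = C then r * b B else 0))"
    by (intro sum.cong refl) (auto simp: cl_sign_empty1)
  also have "\<dots> = r * b C"
    using assms by (subst sum_collapse) (auto simp: clifford_def)
  finally show ?thesis .
qed

lemma cl_mult_real_right: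
  assumes "b \<in> clifford n" shows "cl_mult n b (cl_real r) C = r * b C"
proof -
  have "cl_mult n b (cl_real r) C = (\<Sum>A\<in>PS n. (\<Sum>B\<in>PS n. if B = {} then (if (A - B) \<union> (B - A) = C then cl_sign A B else 0) * b A * r else 0))"
    unfolding cl_mult_expand cl_real_def by (intro sum.cong refl) auto
  also have "\<dots> = (\<Sum>A\<in>PS n. (if A = C then r * b A else 0))"
    by (intro sum.cong refl, subst sum_collapse) (auto simp: cl_sign_empty2)
  also have "\<dots> = r * b C"
    using assms by (subst sum_collapse) (auto simp: clifford_def)
  finally show ?thesis .
qed

lemma sphere_facts:
  assumes "j \<in> cl_sphere n"
  shows "j \<in> clifford n" "j {} = 0" "(\<Sum>A\<in>PS n. (j A)\<^sup>2) = 1"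
    "\<And>A. j A \<noteq> 0 \<Longrightarrow> \<exists>i\<in>{1..n}. A = {i}"
proof -
  show jc: "j \<in> clifford n" using assms by (simp add: cl_sphere_def paravectors_def)
  show j0: "j {} = 0" using assms by (simp add: cl_sphere_def)
  have "sqrt (\<Sum>A\<in>PS n. (j A)\<^sup>2) = 1" using assms by (simp add: cl_sphere_def cl_norm_def)
  thus "(\<Sum>A\<in>PS n. (j A)\<^sup>2) = 1" by simp
  fix A assume ne: "j A \<noteq> 0"
  hence sub: "A \<subseteq> {1..n}" using jc by (auto simp: clifford_def)
  have "card A \<le> 1" using assms ne by (auto simp: cl_sphere_def paravectors_def)
  moreover have "A \<noteq> {}" using ne j0 by auto
  moreover have "finite A" using sub finite_subset by blast
  ultimately have "card A = 1" by (simp add: Suc_leI card_gt_0_iff le_antisym)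
  then obtain i where "A = {i}" by (rule card_1_singletonE)
  thus "\<exists>i\<in>{1..n}. A = {i}" using sub by auto
qed

lemma sum_singletons:
  assumes "\<And>A. h A \<noteq> 0 \<Longrightarrow> \<exists>i\<in>{1..n}. A = {i}"
  shows "(\<Sum>A\<in>PS n. h A) = (\<Sum>i\<in>{1..n}. h {i})"
proof -
  have "(\<Sum>i\<in>{1..n}. h {i}) = (\<Sum>A\<in>(\<lambda>i. {i}) ` {1..n}. h A)"
    by (subst sum.reindex) (auto simp: inj_on_def)
  also have "\<dots> = (\<Sum>A\<in>PS n. h A)"
    by (rule sum.mono_neutral_left) (use assms in auto)
  finally show ?thesis by simp
qed

lemma sign_single: "cl_sign {i} {k} = (if k < i \<or> i = k then -1 else 1)"
proof -
  define S where "S = {(i', j'). i' \<in> {i} \<and> j' \<in> {k} \<and> j' < i'}"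
  have cs: "cl_sign {i} {k} = (-1) ^ (card S + card ({i} \<inter> {k}))"
    by (simp add: cl_sign_def S_def)
  consider "k < i" | "i = k" | "i < k" by linarith
  thus ?thesis
  proof cases
    case 1
    hence "S = {(i,k)}" "{i} \<inter> {k} = {}" by (auto simp: S_def)
    thus ?thesis using 1 cs by simp
  next
    case 2
    hence "S = {}" "{i} \<inter> {k} = {i}" by (auto simp: S_def)
    thus ?thesis using 2 cs by simp
  next
    case 3
    hence "S = {}" "{i} \<inter> {k} = {}" by (auto simp: S_def)
    thus ?thesis using 3 cs by simp
  qed
qed

lemma sd_empty: "({i} - {k} \<union> ({k} - {i}) = {}) = (i = k)" by auto

lemma sym_single: "{i} - {k} \<union> ({k} - {i}) = {k} - {i} \<union> ({i} - {k})" by auto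

lemma sphere_sq:
  assumes js: "j \<in> cl_sphere n"
  shows "cl_mult n j j C = cl_real (-1) C"
proof -
  note sf = sphere_facts[OF js]
  define g where "g i k = (if {i} - {k} \<union> ({k} - {i}) = C then cl_sign {i} {k} else 0) * j {i} * j {k}" for i k
  have "cl_mult n j j C = (\<Sum>A\<in>PS n. \<Sum>k\<in>{1..n}. (if A - {k} \<union> ({k} - A) = C then cl_sign A {k} else 0) * j A * j {k})"
    unfolding cl_mult_expand
  proof (intro sum.cong refl)
    fix A
    show "(\<Sum>B\<in>PS n. (if A - B \<union> (B - A) = C then cl_sign A B else 0) * j A * j B) =
      (\<Sum>k\<in>{1..n}. (if A - {k} \<union> ({k} - A) = C then cl_sign A {k} else 0) * j A * j {k})"
    proof (rule sum_singletons)
      fix B assume ne: "(if A - B \<union> (B - A) = C then cl_sign A B else 0) * j A * j B \<noteq> 0"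
      show "\<exists>i\<in>{1..n}. B = {i}"
      proof (rule sf(4))
        show "j B \<noteq> 0" using ne by auto
      qed
    qed
  qed
  also have "\<dots> = (\<Sum>i\<in>{1..n}. \<Sum>k\<in>{1..n}. g i k)"
    unfolding g_def
  proof (rule sum_singletons)
    fix A assume ne: "(\<Sum>k\<in>{1..n}. (if A - {k} \<union> ({k} - A) = C then cl_sign A {k} else 0) * j A * j {k}) \<noteq> 0"
    show "\<exists>i\<in>{1..n}. A = {i}"
    proof (rule sf(4))
      show "j A \<noteq> 0"
      proof
        assume "j A = 0"
        hence "(\<Sum>k\<in>{1..n}. (if A - {k} \<union> ({k} - A) = C then cl_sign A {k} else 0) * j A * j {k}) = 0" by simp
        with ne show False by simp
      qed
    qed
  qed
  finally have eq: "cl_mult n j j C = (\<Sum>i\<in>{1..n}. \<Sum>k\<in>{1..n}. g i k)" .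
  show ?thesis
  proof (cases "C = {}")
    case True
    have "(\<Sum>i\<in>{1..n}. \<Sum>k\<in>{1..n}. g i k) = (\<Sum>i\<in>{1..n}. \<Sum>k\<in>{1..n}. if k = i then - (j {i})\<^sup>2 else 0)"
      unfolding g_def using True by (intro sum.cong refl) (simp add: sd_empty sign_single power2_eq_square)
    also have "\<dots> = - (\<Sum>i\<in>{1..n}. (j {i})\<^sup>2)" by (simp add: sum_negf)
    also have "(\<Sum>i\<in>{1..n}. (j {i})\<^sup>2) = (\<Sum>A\<in>PS n. (j A)\<^sup>2)"
      by (rule sum_singletons[symmetric]) (use sf(4) in auto)
    finally show ?thesis using eq sf(3) True by (simp add: cl_real_def)
  next
    case False
    have anti: "g k i = - g i k" for i k
    proof (cases "i = k")
      case True thus ?thesis using False by (simp add: g_def)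
    next
      case ne: False
      have s1: "cl_sign {k} {i} = - cl_sign {i} {k}" using ne by (simp add: sign_single)
      have s2: "{k} - {i} \<union> ({i} - {k}) = {i} - {k} \<union> ({k} - {i})" by auto
      show ?thesis unfolding g_def by (simp only: s1 s2) simp
    qed
    have "(\<Sum>i\<in>{1..n}. \<Sum>k\<in>{1..n}. g i k) = (\<Sum>k\<in>{1..n}. \<Sum>i\<in>{1..n}. g i k)"
      by (rule sum.swap)
    also have "\<dots> = (\<Sum>k\<in>{1..n}. \<Sum>i\<in>{1..n}. - g k i)"
      by (intro sum.cong refl) (rule anti)
    also have "\<dots> = - (\<Sum>k\<in>{1..n}. \<Sum>i\<in>{1..n}. g k i)"
      by (simp only: sum_negf)
    finally have "(\<Sum>i\<in>{1..n}. \<Sum>k\<in>{1..n}. g i k) = 0" by simp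
    thus ?thesis using eq False by (simp add: cl_real_def)
  qed
qed

lemma clifford_add_scale: "a \<in> clifford n \<Longrightarrow> b \<in> clifford n \<Longrightarrow> (\<lambda>C. r * a C + s * b C) \<in> clifford n"
proof -
  assume a: "a \<in> clifford n" and b: "b \<in> clifford n"
  show ?thesis unfolding clifford_def
  proof (safe)
    fix A x assume h: "r * a A + s * b A \<noteq> 0" "x \<in> A"
    hence "a A \<noteq> 0 \<or> b A \<noteq> 0" by auto
    moreover have "a A \<noteq> 0 \<Longrightarrow> A \<subseteq> {1..n}" using a by (simp add: clifford_def)
    moreover have "b A \<noteq> 0 \<Longrightarrow> A \<subseteq> {1..n}" using b by (simp add: clifford_def)
    ultimately have "A \<subseteq> {1..n}" by blast
    thus "x \<in> {1..n}" using h(2) by (rule subsetD)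
  qed
qed

lemma cl_pow_slice:
  assumes js: "j \<in> cl_sphere n"
  shows "cl_pow n (cl_add (cl_real u) (cl_scale v j)) l
     = (\<lambda>C. Re (Complex u v ^ l) * cl_real 1 C + Im (Complex u v ^ l) * j C)"
proof (induction l)
  case 0
  show ?case by (auto simp: cl_real_def)
next
  case (Suc l)
  note sf = sphere_facts[OF js]
  define P where "P = Re (Complex u v ^ l)"
  define Q where "Q = Im (Complex u v ^ l)"
  have xc: "(\<lambda>C. 1 * cl_real u C + v * j C) \<in> clifford n"
    by (rule clifford_add_scale[OF cl_real_clifford sf(1)])
  have x_eq: "cl_add (cl_real u) (cl_scale v j) = (\<lambda>C. 1 * cl_real u C + v * j C)"
    by (simp add: cl_add_def cl_scale_def)
  have re: "Re (Complex u v ^ Suc l) = P * u - Q * v" and im: "Im (Complex u v ^ Suc l) = P * v + Q * u"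
    by (simp_all add: P_def Q_def power_Suc2 algebra_simps)
  show ?case
  proof
    fix C
    have "cl_pow n (cl_add (cl_real u) (cl_scale v j)) (Suc l) C
       = cl_mult n (\<lambda>C. P * cl_real 1 C + Q * j C) (\<lambda>C. 1 * cl_real u C + v * j C) C"
      using Suc by (simp add: x_eq P_def Q_def)
    also have "\<dots> = P * cl_mult n (cl_real 1) (\<lambda>C. 1 * cl_real u C + v * j C) C
        + Q * (cl_mult n j (cl_real u) C + v * cl_mult n j j C)"
      by (simp only: cl_mult_add_left cl_mult_scale_left cl_mult_add_right cl_mult_scale_right mult_1)
    also have "\<dots> = P * (cl_real u C + v * j C) + Q * (u * j C + v * cl_real (-1) C)"
      using xc by (simp add: cl_mult_real_left cl_mult_real_right sf(1) sphere_sq[OF js])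
    also have "\<dots> = Re (Complex u v ^ Suc l) * cl_real 1 C + Im (Complex u v ^ Suc l) * j C"
      unfolding re im by (simp add: cl_real_def algebra_simps)
    finally show "cl_pow n (cl_add (cl_real u) (cl_scale v j)) (Suc l) C = Re (Complex u v ^ Suc l) * cl_real 1 C + Im (Complex u v ^ Suc l) * j C" .
  qed
qed

lemma poly_slice:
  assumes js: "j \<in> cl_sphere n" and ac: "\<forall>l. a l \<in> clifford n"
  shows "poly_fun n a N (cl_add (cl_real u) (cl_scale v j)) C
    = (\<Sum>l\<le>N. Re (Complex u v ^ l) * a l C) + cl_mult n j (\<lambda>B. \<Sum>l\<le>N. Im (Complex u v ^ l) * a l B) C"
proof -
  have "poly_fun n a N (cl_add (cl_real u) (cl_scale v j)) C
     = (\<Sum>l\<le>N. Re (Complex u v ^ l) * a l C + Im (Complex u v ^ l) * cl_mult n j (a l) C)"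
    unfolding poly_fun_def cl_pow_slice[OF js]
    by (intro sum.cong refl) (simp add: cl_mult_add_left cl_mult_scale_left cl_mult_real_left ac)
  also have "\<dots> = (\<Sum>l\<le>N. Re (Complex u v ^ l) * a l C) + cl_mult n j (\<lambda>B. \<Sum>l\<le>N. Im (Complex u v ^ l) * a l B) C"
  proof -
    have "cl_mult n j (\<lambda>B. \<Sum>l\<le>N. Im (Complex u v ^ l) * a l B) C
       = (\<Sum>l\<le>N. cl_mult n j (\<lambda>B. Im (Complex u v ^ l) * a l B) C)"
      by (rule cl_mult_sum_right[of "{..N}" n j "\<lambda>l B. Im (Complex u v ^ l) * a l B"]) simp
    also have "\<dots> = (\<Sum>l\<le>N. Im (Complex u v ^ l) * cl_mult n j (a l) C)"
      by (intro sum.cong refl) (rule cl_mult_scale_right)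
    finally show ?thesis by (simp only: sum.distrib)
  qed
  finally show ?thesis .
qed

definition e1 :: cl where "e1 = (\<lambda>A. if A = {1} then 1 else 0)"

lemma card_PS: "card (PS n) = 2 ^ n" "card (Pow {Suc 0..n}) = 2 ^ n"
  by (simp_all add: card_Pow)

lemma comp_le_norm: "A \<in> PS n \<Longrightarrow> \<bar>b A\<bar> \<le> cl_norm n b"
proof -
  assume A: "A \<in> PS n"
  have "(b A)\<^sup>2 \<le> (\<Sum>B\<in>PS n. (b B)\<^sup>2)"
    by (rule member_le_sum) (use A in auto)
  hence "sqrt ((b A)\<^sup>2) \<le> cl_norm n b" unfolding cl_norm_def by (rule real_sqrt_le_mono)
  thus ?thesis by simp
qed

lemma norm_le_comp:
  assumes "\<And>A. A \<in> PS n \<Longrightarrow> \<bar>b A\<bar> \<le> \<beta>"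
  shows "cl_norm n b \<le> 2 ^ n * \<beta>"
proof -
  have b0: "0 \<le> \<beta>" using assms[of "{}"] by auto
  have "(\<Sum>B\<in>PS n. (b B)\<^sup>2) \<le> (\<Sum>B\<in>PS n. \<beta>\<^sup>2)"
  proof (rule sum_mono)
    fix B assume "B \<in> PS n"
    hence "\<bar>b B\<bar> \<le> \<beta>" by (rule assms)
    thus "(b B)\<^sup>2 \<le> \<beta>\<^sup>2" by (metis abs_ge_zero power2_abs power_mono)
  qed
  also have "\<dots> = 2 ^ n * \<beta>\<^sup>2" by (simp add: card_PS)
  also have "\<dots> \<le> (2 ^ n) ^ 2 * \<beta>\<^sup>2"
    by (intro mult_right_mono) (auto simp: power2_eq_square)
  also have "\<dots> = (2 ^ n * \<beta>)\<^sup>2" by (simp add: power_mult_distrib)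
  finally have "cl_norm n b \<le> sqrt ((2 ^ n * \<beta>)\<^sup>2)" unfolding cl_norm_def by (rule real_sqrt_le_mono)
  thus ?thesis using b0 by simp
qed

lemma sphere_comp_le: "j \<in> cl_sphere n \<Longrightarrow> \<bar>j A\<bar> \<le> 1"
proof -
  assume js: "j \<in> cl_sphere n"
  show ?thesis
  proof (cases "A \<in> PS n")
    case True
    hence "\<bar>j A\<bar> \<le> cl_norm n j" by (rule comp_le_norm)
    thus ?thesis using js by (simp add: cl_sphere_def)
  next
    case False
    hence "j A = 0" using sphere_facts(1)[OF js] by (auto simp: clifford_def)
    thus ?thesis by simp
  qed
qed

lemma sign_sq: "cl_sign A B * cl_sign A B = 1"
  by (simp add: cl_sign_def flip: power_add)

lemma abs_sign: "\<bar>cl_sign A B\<bar> = 1"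
  by (simp add: cl_sign_def power_abs)

lemma mult_bound:
  assumes j: "\<And>A. \<bar>j A\<bar> \<le> 1" and b: "\<And>B. B \<in> PS n \<Longrightarrow> \<bar>b B\<bar> \<le> \<beta>"
  shows "\<bar>cl_mult n j b C\<bar> \<le> 4 ^ n * \<beta>"
proof -
  have "\<bar>cl_mult n j b C\<bar> \<le> (\<Sum>A\<in>PS n. \<bar>\<Sum>B\<in>PS n. (if A - B \<union> (B - A) = C then cl_sign A B else 0) * j A * b B\<bar>)"
    unfolding cl_mult_expand by (rule sum_abs)
  also have "\<dots> \<le> (\<Sum>A\<in>PS n. \<Sum>B\<in>PS n. \<beta>)"
  proof (rule sum_mono)
    fix A assume "A \<in> PS n"
    have "\<bar>\<Sum>B\<in>PS n. (if A - B \<union> (B - A) = C then cl_sign A B else 0) * j A * b B\<bar>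
      \<le> (\<Sum>B\<in>PS n. \<bar>(if A - B \<union> (B - A) = C then cl_sign A B else 0) * j A * b B\<bar>)"
      by (rule sum_abs)
    also have "\<dots> \<le> (\<Sum>B\<in>PS n. \<beta>)"
    proof (rule sum_mono)
      fix B assume B: "B \<in> PS n"
      have c: "\<bar>(if A - B \<union> (B - A) = C then cl_sign A B else 0)\<bar> \<le> 1" by (simp add: abs_sign)
      have "\<bar>(if A - B \<union> (B - A) = C then cl_sign A B else 0) * j A * b B\<bar>
        = \<bar>(if A - B \<union> (B - A) = C then cl_sign A B else 0)\<bar> * \<bar>j A\<bar> * \<bar>b B\<bar>" by (simp add: abs_mult)
      also have "\<dots> \<le> 1 * 1 * \<beta>"
        by (intro mult_mono c j b B) auto
      finally show "\<bar>(if A - B \<union> (B - A) = C then cl_sign A B else 0) * j A * b B\<bar> \<le> \<beta>" by simp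
    qed
    finally show "\<bar>\<Sum>B\<in>PS n. (if A - B \<union> (B - A) = C then cl_sign A B else 0) * j A * b B\<bar> \<le> (\<Sum>B\<in>PS n. \<beta>)" .
  qed
  also have "\<dots> = 4 ^ n * \<beta>"
    by (simp add: card_PS power_mult_distrib[symmetric] flip: of_nat_mult)
  finally show ?thesis .
qed

lemma e1_sphere: "n \<ge> 1 \<Longrightarrow> e1 \<in> cl_sphere n"
proof -
  assume n: "n \<ge> 1"
  have s: "(\<Sum>A\<in>PS n. (e1 A)\<^sup>2) = 1"
  proof -
    have "(\<Sum>A\<in>PS n. (e1 A)\<^sup>2) = (\<Sum>A\<in>PS n. if A = {1} then 1 else 0)"
      by (intro sum.cong refl) (simp add: e1_def)
    also have "\<dots> = 1" using n by (subst sum.delta) auto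
    finally show ?thesis .
  qed
  have nrm: "cl_norm n e1 = 1" unfolding cl_norm_def s by simp
  have c: "e1 \<in> clifford n" using n by (auto simp: clifford_def e1_def)
  have p: "\<forall>A. e1 A \<noteq> 0 \<longrightarrow> card A \<le> 1" unfolding e1_def by auto
  have z: "e1 {} = 0" by (simp add: e1_def)
  show ?thesis unfolding cl_sphere_def paravectors_def using c p z nrm by blast
qed

lemma symdiff_inj: "({1} - B' \<union> (B' - {1}) = B - {1} \<union> ({1} - B)) = (B' = (B::nat set))"
  by blast

lemma e1_mult:
  assumes n: "n \<ge> 1" and B: "B \<subseteq> {1..n}"
  shows "cl_mult n e1 b (B - {1} \<union> ({1} - B)) = cl_sign {1} B * b B"
proof -
  define C where "C = B - {1} \<union> ({1} - B)"
  have "cl_mult n e1 b C = (\<Sum>A\<in>PS n. if A = {1} then (\<Sum>B'\<in>PS n. (if A - B' \<union> (B' - A) = C then cl_sign A B' else 0) * b B') else 0)"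
    unfolding cl_mult_expand by (intro sum.cong refl) (auto simp: e1_def)
  also have "\<dots> = (\<Sum>B'\<in>PS n. (if {1} - B' \<union> (B' - {1}) = C then cl_sign {1} B' else 0) * b B')"
    using n by (subst sum.delta) auto
  also have "\<dots> = (\<Sum>B'\<in>PS n. if B' = B then cl_sign {1} B' * b B' else 0)"
    unfolding C_def symdiff_inj by (intro sum.cong refl) auto
  also have "\<dots> = cl_sign {1} B * b B"
    using B by (subst sum.delta) auto
  finally show ?thesis unfolding C_def .
qed

lemma slice_norm:
  assumes js: "j \<in> cl_sphere n"
  shows "cl_norm n (cl_add (cl_real u) (cl_scale v j)) = cmod (Complex u v)"
proof -
  note sf = sphere_facts[OF js]
  have "(\<Sum>A\<in>PS n. (cl_add (cl_real u) (cl_scale v j) A)\<^sup>2)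
     = (\<Sum>A\<in>PS n. (cl_real u A)\<^sup>2 + 2 * v * (cl_real u A * j A) + v\<^sup>2 * (j A)\<^sup>2)"
    by (intro sum.cong refl) (simp add: cl_add_def cl_scale_def power2_eq_square algebra_simps)
  also have "\<dots> = (\<Sum>A\<in>PS n. (cl_real u A)\<^sup>2) + 2 * v * (\<Sum>A\<in>PS n. cl_real u A * j A) + v\<^sup>2 * (\<Sum>A\<in>PS n. (j A)\<^sup>2)"
    by (simp add: sum.distrib sum_distrib_left)
  also have "(\<Sum>A\<in>PS n. (cl_real u A)\<^sup>2) = (\<Sum>A\<in>PS n. if A = {} then u\<^sup>2 else 0)"
    by (intro sum.cong refl) (simp add: cl_real_def)
  also have "\<dots> = u\<^sup>2" by (subst sum.delta) auto
  also have "(\<Sum>A\<in>PS n. cl_real u A * j A) = (\<Sum>A\<in>PS n. if A = {} then u * j A else 0)"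
    by (intro sum.cong refl) (simp add: cl_real_def)
  also have "\<dots> = 0" using sf(2) by (subst sum.delta) auto
  finally have "(\<Sum>A\<in>PS n. (cl_add (cl_real u) (cl_scale v j) A)\<^sup>2) = u\<^sup>2 + v\<^sup>2" using sf(3) by simp
  thus ?thesis by (simp add: cl_norm_def cmod_def)
qed

lemma slice_para:
  assumes js: "j \<in> cl_sphere n"
  shows "cl_add (cl_real u) (cl_scale v j) \<in> paravectors n"
proof -
  note sf = sphere_facts[OF js]
  have eq: "cl_add (cl_real u) (cl_scale v j) = (\<lambda>C. u * cl_real 1 C + v * j C)"
    by (auto simp: cl_add_def cl_scale_def cl_real_def)
  have c: "cl_add (cl_real u) (cl_scale v j) \<in> clifford n"
    unfolding eq by (rule clifford_add_scale[OF cl_real_clifford sf(1)])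
  have "card A \<le> 1" if "cl_add (cl_real u) (cl_scale v j) A \<noteq> 0" for A
  proof (cases "A = {}")
    case False
    hence "j A \<noteq> 0" using that by (simp add: cl_add_def cl_scale_def cl_real_def)
    then obtain i where "A = {i}" using sf(4) by blast
    thus ?thesis by simp
  qed simp
  thus ?thesis using c by (simp add: paravectors_def)
qed

lemma para_decomp:
  assumes x: "x \<in> paravectors n" and n: "n \<ge> 1"
  shows "\<exists>u v j. j \<in> cl_sphere n \<and> x = cl_add (cl_real u) (cl_scale v j)"
proof -
  have xc: "x \<in> clifford n" and xp: "\<And>A. x A \<noteq> 0 \<Longrightarrow> card A \<le> 1" using x by (auto simp: paravectors_def)
  define w where "w = (\<Sum>A\<in>PS n - {{}}. (x A)\<^sup>2)"
  have w0: "w \<ge> 0" unfolding w_def by (intro sum_nonneg) auto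
  show ?thesis
  proof (cases "w = 0")
    case True
    have z: "x A = 0" if "A \<noteq> {}" for A
    proof (cases "A \<in> PS n")
      case True
      hence "A \<in> PS n - {{}}" using that by auto
      hence "(x A)\<^sup>2 = 0" using \<open>w = 0\<close> unfolding w_def
        by (subst (asm) sum_nonneg_eq_0_iff) auto
      thus ?thesis by simp
    next
      case False thus ?thesis using xc by (auto simp: clifford_def)
    qed
    have "x = cl_add (cl_real (x {})) (cl_scale 0 e1)"
      by (rule ext) (auto simp: cl_add_def cl_scale_def cl_real_def z)
    thus ?thesis using e1_sphere[OF n] by blast
  next
    case False
    hence wp: "w > 0" using w0 by simp
    define v where "v = sqrt w"
    have vp: "v > 0" using wp by (simp add: v_def)
    define j where "j = (\<lambda>A. if A = {} then 0 else x A / v)"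
    have jc: "j \<in> clifford n" using xc by (auto simp: clifford_def j_def)
    have jp: "\<forall>A. j A \<noteq> 0 \<longrightarrow> card A \<le> 1" using xp by (auto simp: j_def)
    have "(\<Sum>A\<in>PS n. (j A)\<^sup>2) = (\<Sum>A\<in>PS n - {{}}. (j A)\<^sup>2)"
      by (rule sum.mono_neutral_right) (auto simp: j_def)
    also have "\<dots> = (\<Sum>A\<in>PS n - {{}}. (x A)\<^sup>2 / w)"
      by (intro sum.cong refl) (auto simp: j_def v_def power_divide w0)
    also have "\<dots> = 1" using wp by (simp add: sum_divide_distrib[symmetric] w_def)
    finally have "cl_norm n j = 1" by (simp add: cl_norm_def)
    hence js: "j \<in> cl_sphere n" using jc jp by (simp add: cl_sphere_def paravectors_def j_def)
    have "x = cl_add (cl_real (x {})) (cl_scale v j)"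
      by (rule ext) (use vp in \<open>auto simp: cl_add_def cl_scale_def cl_real_def j_def\<close>)
    thus ?thesis using js by blast
  qed
qed

lemma pow_term_bound:
  assumes js: "j \<in> cl_sphere n" and ac: "a \<in> clifford n"
    and ab: "\<And>B. B \<in> PS n \<Longrightarrow> \<bar>a B\<bar> \<le> \<beta>"
  shows "\<bar>cl_mult n (cl_pow n (cl_add (cl_real u) (cl_scale v j)) l) a C\<bar> \<le> (1 + 4 ^ n) * \<beta> * cmod (Complex u v) ^ l"
proof -
  have b0: "0 \<le> \<beta>" using ab[of "{}"] by auto
  define P where "P = Re (Complex u v ^ l)"
  define Q where "Q = Im (Complex u v ^ l)"
  have "cl_mult n (cl_pow n (cl_add (cl_real u) (cl_scale v j)) l) a C = P * a C + Q * cl_mult n j a C"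
    unfolding cl_pow_slice[OF js] P_def Q_def
    by (simp add: cl_mult_add_left cl_mult_scale_left cl_mult_real_left ac)
  also have "\<bar>\<dots>\<bar> \<le> \<bar>P\<bar> * \<bar>a C\<bar> + \<bar>Q\<bar> * \<bar>cl_mult n j a C\<bar>"
    by (simp add: abs_mult abs_triangle_ineq[THEN order_trans])
  also have "\<dots> \<le> cmod (Complex u v) ^ l * \<beta> + cmod (Complex u v) ^ l * (4 ^ n * \<beta>)"
  proof (intro add_mono mult_mono)
    show "\<bar>P\<bar> \<le> cmod (Complex u v) ^ l" unfolding P_def by (metis abs_Re_le_cmod norm_power)
    show "\<bar>Q\<bar> \<le> cmod (Complex u v) ^ l" unfolding Q_def by (metis abs_Im_le_cmod norm_power)
    show "\<bar>a C\<bar> \<le> \<beta>"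
    proof (cases "C \<in> PS n")
      case True thus ?thesis by (rule ab)
    next
      case False hence "a C = 0" using ac by (auto simp: clifford_def)
      thus ?thesis using b0 by simp
    qed
    show "\<bar>cl_mult n j a C\<bar> \<le> 4 ^ n * \<beta>"
      by (rule mult_bound) (use sphere_comp_le[OF js] ab in auto)
  qed (use b0 in auto)
  also have "\<dots> = (1 + 4 ^ n) * \<beta> * cmod (Complex u v) ^ l" by (simp add: algebra_simps)
  finally show ?thesis .
qed

lemma cnj_pow_parts: "Re (Complex u (-v) ^ l) = Re (Complex u v ^ l)" "Im (Complex u (-v) ^ l) = - Im (Complex u v ^ l)"
proof -
  have c: "cnj (Complex u v) = Complex u (-v)" by (simp add: complex_eq_iff)
  have e: "Complex u (-v) ^ l = cnj (Complex u v ^ l)" unfolding complex_cnj_power c ..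
  show "Re (Complex u (-v) ^ l) = Re (Complex u v ^ l)" "Im (Complex u (-v) ^ l) = - Im (Complex u v ^ l)"
    unfolding e by (simp_all del: complex_cnj_power)
qed

lemma cl_norm_nonneg: "cl_norm n b \<ge> 0"
  unfolding cl_norm_def by (intro real_sqrt_ge_zero sum_nonneg) auto

lemma slice_series:
  assumes n: "n \<ge> 1" and ac: "\<forall>l. a l \<in> clifford n"
    and conv: "\<forall>x\<in>paravectors n. \<forall>A. (\<lambda>N. poly_fun n a N x A) \<longlonglongrightarrow> f x A"
    and B: "B \<in> PS n"
  shows "\<exists>L. (\<lambda>l. complex_of_real (a l B) * Complex u v ^ l) sums L \<and>
     cmod L \<le> cl_norm n (f (cl_add (cl_real u) (cl_scale v e1))) + cl_norm n (f (cl_add (cl_real u) (cl_scale (-v) e1)))"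
proof -
  have e1s: "e1 \<in> cl_sphere n" by (rule e1_sphere[OF n])
  define z where "z = Complex u v"
  define x where "x = cl_add (cl_real u) (cl_scale v e1)"
  define x' where "x' = cl_add (cl_real u) (cl_scale (-v) e1)"
  have xp: "x \<in> paravectors n" "x' \<in> paravectors n" unfolding x_def x'_def by (rule slice_para[OF e1s])+
  define D where "D = B - {1} \<union> ({1} - B)"
  have Bs: "B \<subseteq> {1..n}" using B by simp
  have Dp: "D \<in> PS n" using Bs n by (auto simp: D_def)
  define SP where "SP N C = (\<Sum>l\<le>N. Re (z ^ l) * a l C)" for N C
  define SQ where "SQ N = (\<lambda>C. \<Sum>l\<le>N. Im (z ^ l) * a l C)" for N
  define EQ where "EQ N C = cl_mult n e1 (SQ N) C" for N C
  have px: "poly_fun n a N x C = SP N C + EQ N C" for N C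
    unfolding x_def SP_def EQ_def SQ_def z_def by (rule poly_slice[OF e1s ac])
  have px': "poly_fun n a N x' C = SP N C - EQ N C" for N C
  proof -
    have "poly_fun n a N x' C = (\<Sum>l\<le>N. Re (z ^ l) * a l C) + cl_mult n e1 (\<lambda>B. \<Sum>l\<le>N. - Im (z ^ l) * a l B) C"
      unfolding x'_def z_def poly_slice[OF e1s ac] cnj_pow_parts ..
    also have "(\<lambda>B. \<Sum>l\<le>N. - Im (z ^ l) * a l B) = (\<lambda>B. (-1) * SQ N B)"
      by (simp add: SQ_def sum_negf)
    also have "cl_mult n e1 (\<lambda>B. (-1) * SQ N B) C = (-1) * EQ N C"
      unfolding EQ_def by (rule cl_mult_scale_right)
    finally show ?thesis by (simp add: SP_def)
  qed
  have SP_eq: "SP N B = (poly_fun n a N x B + poly_fun n a N x' B) / 2" for N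
    by (simp add: px px')
  have EQ_eq: "EQ N D = (poly_fun n a N x D - poly_fun n a N x' D) / 2" for N
    by (simp add: px px')
  have SQ_eq: "SQ N B = cl_sign {1} B * EQ N D" for N
  proof -
    have "EQ N D = cl_sign {1} B * SQ N B" unfolding EQ_def D_def by (rule e1_mult[OF n Bs])
    hence "cl_sign {1} B * EQ N D = (cl_sign {1} B * cl_sign {1} B) * SQ N B" by simp
    thus ?thesis by (simp add: sign_sq)
  qed
  define LP where "LP = (f x B + f x' B) / 2"
  define LQ where "LQ = cl_sign {1} B * ((f x D - f x' D) / 2)"
  have limP: "(\<lambda>N. SP N B) \<longlonglongrightarrow> LP"
    unfolding SP_eq LP_def using conv xp by (intro tendsto_intros) auto
  have limQ: "(\<lambda>N. SQ N B) \<longlonglongrightarrow> LQ"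
    unfolding SQ_eq EQ_eq LQ_def using conv xp by (intro tendsto_intros) auto
  have psum: "(\<Sum>l\<le>N. complex_of_real (a l B) * z ^ l) = Complex (SP N B) (SQ N B)" for N
    by (simp add: complex_eq_iff Re_sum Im_sum SP_def SQ_def mult.commute)
  have sums: "(\<lambda>l. complex_of_real (a l B) * z ^ l) sums Complex LP LQ"
    unfolding sums_def_le psum by (intro tendsto_Complex limP limQ)
  have fB: "\<bar>f y C\<bar> \<le> cl_norm n (f y)" if "C \<in> PS n" for y C using that by (rule comp_le_norm)
  have "cmod (Complex LP LQ) \<le> \<bar>LP\<bar> + \<bar>LQ\<bar>" using cmod_le[of "Complex LP LQ"] by simp
  also have "\<bar>LP\<bar> \<le> (cl_norm n (f x) + cl_norm n (f x')) / 2"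
    unfolding LP_def using fB[OF B, of x] fB[OF B, of x'] by simp
  also have "\<bar>LQ\<bar> \<le> (cl_norm n (f x) + cl_norm n (f x')) / 2"
    unfolding LQ_def using fB[OF Dp, of x] fB[OF Dp, of x'] by (simp add: abs_mult abs_sign)
  finally have "cmod (Complex LP LQ) \<le> cl_norm n (f x) + cl_norm n (f x')" by simp
  thus ?thesis using sums unfolding x_def x'_def z_def by blast
qed

lemma coeff_est:
  assumes n: "n \<ge> 1" and ac: "\<forall>l. a l \<in> clifford n"
    and conv: "\<forall>x\<in>paravectors n. \<forall>A. (\<lambda>N. poly_fun n a N x A) \<longlonglongrightarrow> f x A"
    and fb: "\<forall>x\<in>paravectors n. cl_norm n (f x) \<le> G (cl_norm n x)"
    and r: "r > 0"
  shows "\<bar>a l B\<bar> \<le> 2 * G r / r ^ l"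
proof -
  have e1s: "e1 \<in> cl_sphere n" by (rule e1_sphere[OF n])
  have Gn: "cl_norm n (f (cl_add (cl_real u) (cl_scale v e1))) \<le> G (cmod (Complex u v))" for u v
    using fb slice_para[OF e1s] slice_norm[OF e1s] by metis
  have "cmod (Complex r 0) = r" using r by (simp add: cmod_def)
  hence G0: "G r \<ge> 0" using Gn[of r 0] cl_norm_nonneg[of n] by (metis order_trans)
  show ?thesis
  proof (cases "B \<in> PS n")
    case False
    hence "a l B = 0" using ac by (auto simp: clifford_def)
    thus ?thesis using G0 r by simp
  next
    case True
    have key: "\<exists>L. (\<lambda>l. complex_of_real (a l B) * z ^ l) sums L \<and> cmod L \<le> 2 * G (cmod z)" for z
    proof -
      obtain L where L: "(\<lambda>l. complex_of_real (a l B) * Complex (Re z) (Im z) ^ l) sums L"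
        "cmod L \<le> cl_norm n (f (cl_add (cl_real (Re z)) (cl_scale (Im z) e1))) + cl_norm n (f (cl_add (cl_real (Re z)) (cl_scale (- Im z) e1)))"
        using slice_series[OF n ac conv True] by blast
      have "cmod (Complex (Re z) (- Im z)) = cmod z" by (simp add: cmod_def)
      hence "cmod L \<le> G (cmod z) + G (cmod z)" using L(2) Gn[of "Re z" "Im z"] Gn[of "Re z" "- Im z"] by simp
      thus ?thesis using L(1) by auto
    qed
    have "cmod (complex_of_real (a l B)) \<le> 2 * G r / r ^ l"
    proof (rule coeff_cauchy[OF _ r])
      fix z :: complex
      show "summable (\<lambda>l. complex_of_real (a l B) * z ^ l)" using key[of z] sums_summable by blast
    next
      fix z :: complex assume "cmod z = r"
      thus "cmod (\<Sum>l. complex_of_real (a l B) * z ^ l) \<le> 2 * G r" using key[of z] sums_unique by fastforce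
    qed
    thus ?thesis by simp
  qed
qed

lemma prox_growth:
  assumes po: "proximate_order rh \<rho>" and s: "s > 0" and st: "s < t"
  shows "\<exists>q>1. \<exists>R\<ge>1. \<forall>r\<ge>R. s * (q * r) powr rh (q * r) \<le> t * r powr rh r"
proof -
  have rho: "\<rho> > 0" and nn: "\<And>r. r \<ge> 0 \<Longrightarrow> rh r \<ge> 0"
    and dif: "\<And>r. r \<ge> 0 \<Longrightarrow> rh differentiable (at r within {0..})"
    and lim: "(rh \<longlongrightarrow> \<rho>) at_top"
    and dlim: "((\<lambda>r. deriv rh r * r * ln r) \<longlongrightarrow> 0) at_top"
    using po by (auto simp: proximate_order_def)
  define \<phi> where "\<phi> q = s * exp ((\<rho> + 1) * ln q + (q - 1))" for q :: real
  have "(\<phi> \<longlongrightarrow> s * exp ((\<rho> + 1) * ln 1 + (1 - 1))) (at_right 1)"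
    unfolding \<phi>_def by (intro tendsto_intros) auto
  hence "(\<phi> \<longlongrightarrow> s) (at_right 1)" by simp
  hence "eventually (\<lambda>q. \<phi> q < t) (at_right 1)" using st by (rule order_tendstoD)
  moreover have "eventually (\<lambda>q. q > 1) (at_right (1::real))" by (rule eventually_at_right_less)
  ultimately have "eventually (\<lambda>q. \<phi> q < t \<and> q > 1) (at_right (1::real))" by (rule eventually_conj)
  then obtain q where q: "\<phi> q < t" "q > 1" using eventually_happens' trivial_limit_at_right_real by blast
  have "eventually (\<lambda>r. rh r < \<rho> + 1) at_top" using lim by (rule order_tendstoD) simp
  then obtain R1 where R1: "\<And>r. r \<ge> R1 \<Longrightarrow> rh r < \<rho> + 1" by (auto simp: eventually_at_top_linorder)
  have "eventually (\<lambda>r. \<bar>deriv rh r * r * ln r\<bar> < 1) at_top"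
    using dlim by (auto simp: tendsto_iff dist_real_def dest!: spec[of _ 1])
  then obtain R2 where R2: "\<And>r. r \<ge> R2 \<Longrightarrow> \<bar>deriv rh r * r * ln r\<bar> < 1" by (auto simp: eventually_at_top_linorder)
  define R where "R = max 1 (max R1 R2)"
  have "\<forall>r\<ge>R. s * (q * r) powr rh (q * r) \<le> t * r powr rh r"
  proof (intro allI impI)
    fix r assume rR: "r \<ge> R"
    have r1: "r \<ge> 1" using rR by (simp add: R_def)
    have qr: "q * r > r" using q r1 by simp
    have der: "DERIV rh x :> deriv rh x" if "r \<le> x" "x \<le> q * r" for x
    proof -
      have x0: "x > 0" using that r1 by simp
      have "rh differentiable (at x within {0..})" using x0 dif by simp
      moreover have "at x within {0..} = at x"
        by (rule at_within_interior) (use x0 in simp)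
      ultimately have "rh differentiable (at x)" by simp
      thus ?thesis by (simp add: DERIV_deriv_iff_real_differentiable)
    qed
    obtain \<xi> where xi: "r < \<xi>" "\<xi> < q * r" and mvt: "rh (q * r) - rh r = (q * r - r) * deriv rh \<xi>"
      using MVT2[OF qr der] by blast
    have lnr: "ln r \<ge> 0" using r1 by simp
    have "r * ln r \<le> \<xi> * ln \<xi>"
      using xi r1 lnr by (intro mult_mono) auto
    have e: "(rh (q * r) - rh r) * ln r = (q - 1) * deriv rh \<xi> * (r * ln r)"
      unfolding mvt by (simp add: algebra_simps)
    have "\<bar>(rh (q * r) - rh r) * ln r\<bar> = (q - 1) * \<bar>deriv rh \<xi>\<bar> * (r * ln r)"
      unfolding e using q lnr r1 by (simp add: abs_mult)
    also have "\<dots> \<le> (q - 1) * \<bar>deriv rh \<xi>\<bar> * (\<xi> * ln \<xi>)"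
      using \<open>r * ln r \<le> \<xi> * ln \<xi>\<close> q by (intro mult_left_mono) auto
    also have "\<dots> = (q - 1) * \<bar>deriv rh \<xi> * \<xi> * ln \<xi>\<bar>"
      using xi r1 \<open>r * ln r \<le> \<xi> * ln \<xi>\<close> by (simp add: abs_mult)
    also have "\<dots> \<le> (q - 1) * 1"
      using R2[of \<xi>] xi rR q by (intro mult_left_mono) (auto simp: R_def)
    finally have d: "(rh (q * r) - rh r) * ln r \<le> q - 1" by simp
    have "R1 \<le> q * r" using rR qr unfolding R_def by linarith
    hence rq: "rh (q * r) \<le> \<rho> + 1" using R1[of "q * r"] by simp
    have lnq: "ln q > 0" using q by simp
    have "(q * r) powr rh (q * r) = exp (rh (q * r) * ln q + (rh (q * r) - rh r) * ln r) * r powr rh r"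
      using q r1 by (simp add: powr_def ln_mult algebra_simps flip: exp_add)
    also have "\<dots> \<le> exp ((\<rho> + 1) * ln q + (q - 1)) * r powr rh r"
      using rq lnq d by (intro mult_right_mono) (auto intro: add_mono mult_right_mono)
    finally have "s * (q * r) powr rh (q * r) \<le> \<phi> q * r powr rh r"
      using s by (simp add: \<phi>_def mult.assoc)
    also have "\<dots> \<le> t * r powr rh r"
      using q by (intro mult_right_mono) auto
    finally show "s * (q * r) powr rh (q * r) \<le> t * r powr rh r" .
  qed
  moreover have "R \<ge> 1" by (simp add: R_def)
  ultimately show ?thesis using q by blast
qed

lemma geom_tail:
  fixes q :: real assumes q: "q > 1"
  shows "(\<Sum>l\<in>{N<..M}. (1 / q) ^ l) \<le> (1 / q) ^ N / (q - 1)"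
proof (cases "N < M")
  case False
  hence "{N<..M} = {}" by auto
  thus ?thesis using q by simp
next
  case True
  define \<theta> where "\<theta> = 1 / q"
  have th: "0 < \<theta>" "\<theta> < 1" using q by (auto simp: \<theta>_def)
  have "{N<..M} = {Suc N..M}" by auto
  hence "(1 - \<theta>) * (\<Sum>l\<in>{N<..M}. \<theta> ^ l) = \<theta> ^ Suc N - \<theta> ^ Suc M"
    using True by (simp add: sum_gp_multiplied)
  also have "\<dots> \<le> \<theta> ^ Suc N" using th by simp
  finally have "(\<Sum>l\<in>{N<..M}. \<theta> ^ l) \<le> \<theta> ^ Suc N / (1 - \<theta>)"
    using th by (simp add: field_simps mult.commute)
  also have "\<theta> ^ Suc N / (1 - \<theta>) = \<theta> ^ N / (q - 1)"
    using q by (simp add: \<theta>_def field_simps)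
  finally show ?thesis by (simp add: \<theta>_def)
qed

lemma poly_diff_split:
  "N \<le> M \<Longrightarrow> poly_fun n a M x C - poly_fun n a N x C = (\<Sum>l\<in>{N<..M}. cl_mult n (cl_pow n x l) (a l) C)"
proof -
  assume NM: "N \<le> M"
  have sp: "{..M} = {..N} \<union> {N<..M}" using NM by auto
  have "poly_fun n a M x C = poly_fun n a N x C + (\<Sum>l\<in>{N<..M}. cl_mult n (cl_pow n x l) (a l) C)"
    unfolding poly_fun_def sp by (rule sum.union_disjoint) auto
  thus ?thesis by simp
qed

lemma tail_est:
  assumes n: "n \<ge> 1" and po: "proximate_order rh \<rho>" and ac: "\<forall>l. a l \<in> clifford n"
    and conv: "\<forall>x\<in>paravectors n. \<forall>A. (\<lambda>N. poly_fun n a N x A) \<longlonglongrightarrow> f x A"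
    and s: "s > 0" and st: "s < t"
    and fb: "\<forall>x\<in>paravectors n. cl_norm n (f x) * weight n rh s x \<le> M"
  shows "\<exists>K q. q > 1 \<and> (\<forall>N. \<forall>x\<in>paravectors n.
      cl_norm n (fun_diff (poly_fun n a N) f x) * weight n rh t x \<le> K * (1 / q) ^ N)"
proof -
  define G where "G r = M * exp (s * r powr rh r)" for r
  have wpos: "weight n rh s' x > 0" for s' x by (simp add: weight_def)
  have fG: "\<forall>x\<in>paravectors n. cl_norm n (f x) \<le> G (cl_norm n x)"
  proof
    fix x assume x: "x \<in> paravectors n"
    have "cl_norm n (f x) * weight n rh s x \<le> M" using fb x by blast
    hence "cl_norm n (f x) \<le> M / weight n rh s x" using wpos by (simp add: field_simps)
    also have "M / weight n rh s x = G (cl_norm n x)"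
      by (simp add: weight_def G_def exp_minus field_simps)
    finally show "cl_norm n (f x) \<le> G (cl_norm n x)" .
  qed
  have M0: "M \<ge> 0"
  proof -
    have "cl_real 0 \<in> paravectors n" by (auto simp: paravectors_def cl_real_def clifford_def)
    hence "cl_norm n (f (cl_real 0)) * weight n rh s (cl_real 0) \<le> M" using fb by blast
    moreover have "cl_norm n (f (cl_real 0)) * weight n rh s (cl_real 0) \<ge> 0"
      using cl_norm_nonneg wpos by (simp add: less_imp_le)
    ultimately show ?thesis by linarith
  qed
  obtain q R where q: "q > 1" and R: "R \<ge> 1" and gr: "\<And>r. r \<ge> R \<Longrightarrow> s * (q * r) powr rh (q * r) \<le> t * r powr rh r"
    using prox_growth[OF po s st] by blast
  define E where "E = exp (t * R powr rh R)"
  have E1: "E \<ge> 1" unfolding E_def using s st by (intro one_le_exp_iff[THEN iffD2] mult_nonneg_nonneg) auto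
  define K where "K = 2 ^ n * ((1 + 4 ^ n) * (2 * (M * E) / (q - 1)))"
  have "\<forall>N. \<forall>x\<in>paravectors n. cl_norm n (fun_diff (poly_fun n a N) f x) * weight n rh t x \<le> K * (1 / q) ^ N"
  proof (intro allI ballI)
    fix N x assume x: "x \<in> paravectors n"
    obtain u v j where js: "j \<in> cl_sphere n" and xe: "x = cl_add (cl_real u) (cl_scale v j)"
      using para_decomp[OF x n] by blast
    define \<nu> where "\<nu> = cl_norm n x"
    have \<nu>: "\<nu> = cmod (Complex u v)" unfolding \<nu>_def xe by (rule slice_norm[OF js])
    have \<nu>0: "\<nu> \<ge> 0" by (simp add: \<nu>_def cl_norm_nonneg)
    define m where "m = max \<nu> R"
    have m1: "m \<ge> 1" "\<nu> \<le> m" using R by (auto simp: m_def)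
    have qm: "q * m > 0" using q m1 by simp
    define T where "T = (1 + 4 ^ n) * (2 * G (q * m) * ((1 / q) ^ N / (q - 1)))"
    have G0: "G (q * m) \<ge> 0" using M0 by (simp add: G_def)
    have trm: "\<bar>cl_mult n (cl_pow n x l) (a l) C\<bar> \<le> (1 + 4 ^ n) * (2 * G (q * m)) * (1 / q) ^ l" for l C
    proof -
      have ab: "\<bar>a l B\<bar> \<le> 2 * G (q * m) / (q * m) ^ l" for B
        by (rule coeff_est[OF n ac conv fG qm])
      have "\<bar>cl_mult n (cl_pow n x l) (a l) C\<bar> \<le> (1 + 4 ^ n) * (2 * G (q * m) / (q * m) ^ l) * \<nu> ^ l"
        unfolding xe \<nu> by (rule pow_term_bound[OF js]) (use ac ab in auto)
      also have "\<dots> = (1 + 4 ^ n) * (2 * G (q * m)) * (\<nu> / (q * m)) ^ l"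
        by (simp add: power_divide)
      also have "\<dots> \<le> (1 + 4 ^ n) * (2 * G (q * m)) * (1 / q) ^ l"
      proof (intro mult_left_mono power_mono)
        show "\<nu> / (q * m) \<le> 1 / q" using m1 q qm \<nu>0 by (simp add: field_simps)
        show "0 \<le> \<nu> / (q * m)" using \<nu>0 qm by simp
      qed (use G0 in auto)
      finally show ?thesis .
    qed
    have compb: "\<bar>fun_diff (poly_fun n a N) f x C\<bar> \<le> T" for C
    proof -
      have lim: "(\<lambda>M'. \<bar>poly_fun n a M' x C - poly_fun n a N x C\<bar>) \<longlonglongrightarrow> \<bar>f x C - poly_fun n a N x C\<bar>"
        using conv x by (intro tendsto_intros) auto
      have "\<forall>M'\<ge>N. \<bar>poly_fun n a M' x C - poly_fun n a N x C\<bar> \<le> T"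
      proof (intro allI impI)
        fix M' assume NM: "N \<le> M'"
        have "\<bar>poly_fun n a M' x C - poly_fun n a N x C\<bar> = \<bar>\<Sum>l\<in>{N<..M'}. cl_mult n (cl_pow n x l) (a l) C\<bar>"
          by (simp add: poly_diff_split[OF NM])
        also have "\<dots> \<le> (\<Sum>l\<in>{N<..M'}. \<bar>cl_mult n (cl_pow n x l) (a l) C\<bar>)" by (rule sum_abs)
        also have "\<dots> \<le> (\<Sum>l\<in>{N<..M'}. (1 + 4 ^ n) * (2 * G (q * m)) * (1 / q) ^ l)"
          by (intro sum_mono trm)
        also have "\<dots> = (1 + 4 ^ n) * (2 * G (q * m)) * (\<Sum>l\<in>{N<..M'}. (1 / q) ^ l)"
          by (simp add: sum_distrib_left)
        also have "\<dots> \<le> (1 + 4 ^ n) * (2 * G (q * m)) * ((1 / q) ^ N / (q - 1))"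
          by (intro mult_left_mono geom_tail[OF q]) (use G0 in auto)
        finally show "\<bar>poly_fun n a M' x C - poly_fun n a N x C\<bar> \<le> T" by (simp add: T_def mult.assoc)
      qed
      hence "\<bar>f x C - poly_fun n a N x C\<bar> \<le> T" by (intro LIMSEQ_le_const2[OF lim]) blast
      thus ?thesis by (simp add: fun_diff_def abs_minus_commute)
    qed
    have nb: "cl_norm n (fun_diff (poly_fun n a N) f x) \<le> 2 ^ n * T"
      by (rule norm_le_comp) (rule compb)
    have GW: "G (q * m) * weight n rh t x \<le> M * E"
    proof -
      have ex: "s * (q * m) powr rh (q * m) - t * \<nu> powr rh \<nu> \<le> t * R powr rh R"
      proof (cases "\<nu> \<ge> R")
        case True
        hence "m = \<nu>" by (simp add: m_def)
        thus ?thesis using gr[OF True] s st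
          by (smt (verit, best) E1 exp_le_cancel_iff mult_nonneg_nonneg powr_ge_zero)
      next
        case False
        hence "m = R" by (simp add: m_def)
        moreover have "t * \<nu> powr rh \<nu> \<ge> 0" using s st by simp
        ultimately show ?thesis using gr[of R] by simp
      qed
      have "G (q * m) * weight n rh t x = M * exp (s * (q * m) powr rh (q * m) - t * \<nu> powr rh \<nu>)"
        by (simp add: G_def weight_def \<nu>_def exp_diff exp_minus field_simps)
      also have "\<dots> \<le> M * E" unfolding E_def using ex M0 by (intro mult_left_mono) auto
      finally show ?thesis .
    qed
    have "cl_norm n (fun_diff (poly_fun n a N) f x) * weight n rh t x \<le> 2 ^ n * T * weight n rh t x"
      using nb wpos by (intro mult_right_mono) (auto simp: less_imp_le)
    also have "\<dots> = 2 ^ n * ((1 + 4 ^ n) * (2 * (G (q * m) * weight n rh t x) * ((1 / q) ^ N / (q - 1))))"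
      by (simp add: T_def algebra_simps)
    also have "\<dots> \<le> 2 ^ n * ((1 + 4 ^ n) * (2 * (M * E) * ((1 / q) ^ N / (q - 1))))"
      using GW q by (intro mult_left_mono mult_right_mono) auto
    also have "\<dots> = K * (1 / q) ^ N" by (simp add: K_def field_simps)
    finally show "cl_norm n (fun_diff (poly_fun n a N) f x) * weight n rh t x \<le> K * (1 / q) ^ N" .
  qed
  thus ?thesis using q by blast
qed

lemma cl_norm_triangle: "cl_norm n (\<lambda>A. b A + c A) \<le> cl_norm n b + cl_norm n c"
proof -
  have e: "cl_norm n h = L2_set h (PS n)" for h by (simp add: cl_norm_def L2_set_def)
  show ?thesis unfolding e by (rule L2_set_triangle_ineq)
qed

lemma weight_mono: "s \<le> t \<Longrightarrow> weight n rh t x \<le> weight n rh s x"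
  unfolding weight_def by (intro exp_le_cancel_iff[THEN iffD2]) (simp add: mult_right_mono)

lemma in_A_mono: "in_A n rh s f \<Longrightarrow> s \<le> t \<Longrightarrow> in_A n rh t f"
proof -
  assume f: "in_A n rh s f" and st: "s \<le> t"
  then obtain M where M: "\<forall>x\<in>paravectors n. cl_norm n (f x) * weight n rh s x \<le> M"
    by (auto simp: in_A_def bdd_above_def)
  have "\<forall>x\<in>paravectors n. cl_norm n (f x) * weight n rh t x \<le> M"
  proof
    fix x assume x: "x \<in> paravectors n"
    have "cl_norm n (f x) * weight n rh t x \<le> cl_norm n (f x) * weight n rh s x"
      by (intro mult_left_mono weight_mono st cl_norm_nonneg)
    thus "cl_norm n (f x) * weight n rh t x \<le> M" using M x by fastforce
  qed
  thus ?thesis using f by (auto simp: in_A_def bdd_above_def)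
qed

lemma slice_from_G:
  fixes G G' :: "nat set \<Rightarrow> complex \<Rightarrow> complex"
  assumes der: "\<And>A z. (G A has_field_derivative G' A z) (at z)"
    and cont: "\<And>A. continuous_on UNIV (G' A)"
    and symm: "\<And>A u v. G A (Complex u (-v)) = cnj (G A (Complex u v))"
    and supp: "\<And>A z. \<not> A \<subseteq> {1..n} \<Longrightarrow> G A z = 0"
    and rep: "\<And>u v j. j \<in> cl_sphere n \<Longrightarrow> f (cl_add (cl_real u) (cl_scale v j))
        = cl_add (\<lambda>A. Re (G A (Complex u v))) (cl_mult n j (\<lambda>A. Im (G A (Complex u v))))"
  shows "slice_monogenic n f"
proof -
  define cx where "cx p = Complex (fst p) (snd p)" for p :: "real \<times> real"
  have cx_eq: "cx = (\<lambda>p. of_real (fst p) + \<i> * of_real (snd p))"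
    by (auto simp: cx_def Complex_eq)
  have cxd: "(cx has_derivative cx) (at p)" for p
    unfolding cx_eq by (auto intro!: derivative_eq_intros)
  have ccx: "continuous_on UNIV cx" unfolding cx_eq by (intro continuous_intros)
  define f0 where "f0 p = (\<lambda>A. Re (G A (cx p)))" for p
  define f1 where "f1 p = (\<lambda>A. Im (G A (cx p)))" for p
  define D0u where "D0u p = (\<lambda>A. Re (G' A (cx p)))" for p
  define D0v where "D0v p = (\<lambda>A. - Im (G' A (cx p)))" for p
  define D1u where "D1u p = (\<lambda>A. Im (G' A (cx p)))" for p
  define D1v where "D1v p = (\<lambda>A. Re (G' A (cx p)))" for p
  have dG: "((\<lambda>p. G A (cx p)) has_derivative (\<lambda>h. G' A (cx p) * cx h)) (at p)" for A p
  proof -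
    have "(G A has_derivative (\<lambda>w. G' A (cx p) * w)) (at (cx p))"
      using der[of A "cx p"] by (simp add: has_field_derivative_def)
    thus ?thesis by (rule has_derivative_compose[OF cxd])
  qed
  have d0: "((\<lambda>q. f0 q A) has_derivative (\<lambda>(h, k). h * D0u p A + k * D0v p A)) (at p)" for A p
  proof -
    have "((\<lambda>q. Re (G A (cx q))) has_derivative (\<lambda>h. Re (G' A (cx p) * cx h))) (at p)"
      by (rule has_derivative_Re[OF dG])
    moreover have "(\<lambda>h. Re (G' A (cx p) * cx h)) = (\<lambda>(h, k). h * D0u p A + k * D0v p A)"
      by (auto simp: cx_def D0u_def D0v_def)
    ultimately show ?thesis by (simp add: f0_def)
  qed
  have d1: "((\<lambda>q. f1 q A) has_derivative (\<lambda>(h, k). h * D1u p A + k * D1v p A)) (at p)" for A p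
  proof -
    have "((\<lambda>q. Im (G A (cx q))) has_derivative (\<lambda>h. Im (G' A (cx p) * cx h))) (at p)"
      by (rule has_derivative_Im[OF dG])
    moreover have "(\<lambda>h. Im (G' A (cx p) * cx h)) = (\<lambda>(h, k). h * D1u p A + k * D1v p A)"
      by (auto simp: cx_def D1u_def D1v_def algebra_simps)
    ultimately show ?thesis by (simp add: f1_def)
  qed
  have cG: "continuous_on UNIV (\<lambda>p. G' A (cx p))" for A
    by (rule continuous_on_compose2[OF cont ccx]) auto
  have conts: "continuous_on UNIV (\<lambda>p. D0u p A) \<and> continuous_on UNIV (\<lambda>p. D0v p A) \<and>
           continuous_on UNIV (\<lambda>p. D1u p A) \<and> continuous_on UNIV (\<lambda>p. D1v p A)" for A
    unfolding D0u_def D0v_def D1u_def D1v_def using cG[of A] by (auto intro!: continuous_intros)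
  have cl: "f0 p \<in> clifford n \<and> f1 p \<in> clifford n" for p
    unfolding clifford_def f0_def f1_def
  proof (intro conjI CollectI allI impI)
    fix A assume "Re (G A (cx p)) \<noteq> 0"
    hence "G A (cx p) \<noteq> 0" by auto
    thus "A \<subseteq> {1..n}" using supp by blast
  next
    fix A assume "Im (G A (cx p)) \<noteq> 0"
    hence "G A (cx p) \<noteq> 0" by auto
    thus "A \<subseteq> {1..n}" using supp by blast
  qed
  have sy: "f0 (u, - v) = f0 (u, v) \<and> f1 (u, - v) = cl_scale (-1) (f1 (u, v))" for u v
    using symm by (auto simp: f0_def f1_def cx_def cl_scale_def)
  have cr: "D0u p = D1v p \<and> D0v p = cl_scale (-1) (D1u p)" for p
    by (auto simp: D0u_def D1v_def D0v_def D1u_def cl_scale_def)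
  have rp: "f (cl_add (cl_real u) (cl_scale v j)) = cl_add (f0 (u, v)) (cl_mult n j (f1 (u, v)))"
    if "j \<in> cl_sphere n" for u v j
    using rep[OF that] by (simp add: f0_def f1_def cx_def)
  show ?thesis unfolding slice_monogenic_def
    by (rule exI[of _ f0], rule exI[of _ f1], rule exI[of _ D0u], rule exI[of _ D0v],
        rule exI[of _ D1u], rule exI[of _ D1v]) (use cl d0 d1 conts sy cr rp in blast)
qed

lemma poly_slice_monogenic:
  assumes ac: "\<forall>l. a l \<in> clifford n"
  shows "slice_monogenic n (poly_fun n a N)"
proof (rule slice_from_G)
  define G where "G A z = (\<Sum>l\<le>N. complex_of_real (a l A) * z ^ l)" for A z
  define G' where "G' A z = (\<Sum>l\<le>N. of_nat l * z ^ (l - Suc 0) * complex_of_real (a l A))" for A z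
  show "(G A has_field_derivative G' A z) (at z)" for A z
    unfolding G_def G'_def by (auto intro!: derivative_eq_intros)
  show "continuous_on UNIV (G' A)" for A
    unfolding G'_def by (intro continuous_intros)
  show "G A (Complex u (-v)) = cnj (G A (Complex u v))" for A u v
  proof -
    have c: "Complex u (-v) = cnj (Complex u v)" by (simp add: complex_eq_iff)
    show ?thesis unfolding c G_def by simp
  qed
  show "G A z = 0" if "\<not> A \<subseteq> {1..n}" for A z
  proof -
    have "a l A = 0" for l using ac that unfolding clifford_def by blast
    thus ?thesis by (simp add: G_def)
  qed
  show "poly_fun n a N (cl_add (cl_real u) (cl_scale v j))
        = cl_add (\<lambda>A. Re (G A (Complex u v))) (cl_mult n j (\<lambda>A. Im (G A (Complex u v))))"
    if js: "j \<in> cl_sphere n" for u v j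
  proof
    fix C
    show "poly_fun n a N (cl_add (cl_real u) (cl_scale v j)) C
        = cl_add (\<lambda>A. Re (G A (Complex u v))) (cl_mult n j (\<lambda>A. Im (G A (Complex u v)))) C"
      unfolding poly_slice[OF js ac] by (simp add: G_def cl_add_def mult.commute)
  qed
qed

lemma para_nonempty: "cl_real 0 \<in> paravectors n"
  by (auto simp: paravectors_def cl_real_def clifford_def)

lemma part1:
  assumes n: "n \<ge> 1" and po: "proximate_order rh \<rho>" and sig: "\<sigma> \<ge> 0"
    and fA: "in_A_plus n rh \<sigma> f" and ac: "\<forall>l. a l \<in> clifford n"
    and conv: "\<forall>x\<in>paravectors n. \<forall>A. (\<lambda>N. poly_fun n a N x A) \<longlonglongrightarrow> f x A"
  shows "conv_A_plus n rh \<sigma> (poly_fun n a) f"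
proof -
  have key: "\<exists>K q M. q > 1 \<and> (\<forall>N. \<forall>x\<in>paravectors n.
      cl_norm n (fun_diff (poly_fun n a N) f x) * weight n rh (\<sigma> + \<epsilon>) x \<le> K * (1 / q) ^ N)
      \<and> (\<forall>x\<in>paravectors n. cl_norm n (f x) * weight n rh (\<sigma> + \<epsilon>) x \<le> M)" if e: "\<epsilon> > 0" for \<epsilon>
  proof -
    have "in_A n rh (\<sigma> + \<epsilon> / 2) f" using fA e by (simp add: in_A_plus_def)
    then obtain M where M: "\<forall>x\<in>paravectors n. cl_norm n (f x) * weight n rh (\<sigma> + \<epsilon> / 2) x \<le> M"
      by (auto simp: in_A_def bdd_above_def)
    obtain K q where Kq: "q > 1" "\<forall>N. \<forall>x\<in>paravectors n.
      cl_norm n (fun_diff (poly_fun n a N) f x) * weight n rh (\<sigma> + \<epsilon>) x \<le> K * (1 / q) ^ N"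
    proof -
      have "\<sigma> + \<epsilon> / 2 > 0" "\<sigma> + \<epsilon> / 2 < \<sigma> + \<epsilon>" using sig e by auto
      from tail_est[OF n po ac conv this M] show ?thesis using that by blast
    qed
    have "\<forall>x\<in>paravectors n. cl_norm n (f x) * weight n rh (\<sigma> + \<epsilon>) x \<le> M"
    proof
      fix x assume x: "x \<in> paravectors n"
      have "cl_norm n (f x) * weight n rh (\<sigma> + \<epsilon>) x \<le> cl_norm n (f x) * weight n rh (\<sigma> + \<epsilon> / 2) x"
        using e by (intro mult_left_mono weight_mono cl_norm_nonneg) auto
      thus "cl_norm n (f x) * weight n rh (\<sigma> + \<epsilon>) x \<le> M" using M x by fastforce
    qed
    thus ?thesis using Kq by blast
  qed
  have polyA: "in_A_plus n rh \<sigma> (poly_fun n a k)" for k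
    unfolding in_A_plus_def
  proof (intro allI impI)
    fix \<epsilon> :: real assume e: "\<epsilon> > 0"
    obtain K q M where q: "q > 1" and K: "\<forall>N. \<forall>x\<in>paravectors n.
      cl_norm n (fun_diff (poly_fun n a N) f x) * weight n rh (\<sigma> + \<epsilon>) x \<le> K * (1 / q) ^ N"
      and M: "\<forall>x\<in>paravectors n. cl_norm n (f x) * weight n rh (\<sigma> + \<epsilon>) x \<le> M"
      using key[OF e] by blast
    have "\<forall>x\<in>paravectors n. cl_norm n (poly_fun n a k x) * weight n rh (\<sigma> + \<epsilon>) x \<le> K * (1 / q) ^ k + M"
    proof
      fix x assume x: "x \<in> paravectors n"
      have pe: "poly_fun n a k x = (\<lambda>A. fun_diff (poly_fun n a k) f x A + f x A)"
        by (simp add: fun_diff_def)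
      have "cl_norm n (poly_fun n a k x) \<le> cl_norm n (fun_diff (poly_fun n a k) f x) + cl_norm n (f x)"
        unfolding pe by (rule cl_norm_triangle)
      hence "cl_norm n (poly_fun n a k x) * weight n rh (\<sigma> + \<epsilon>) x
          \<le> cl_norm n (fun_diff (poly_fun n a k) f x) * weight n rh (\<sigma> + \<epsilon>) x + cl_norm n (f x) * weight n rh (\<sigma> + \<epsilon>) x"
        by (simp add: distrib_right[symmetric] mult_right_mono weight_def)
      also have "\<dots> \<le> K * (1 / q) ^ k + M" using K M x by (intro add_mono) auto
      finally show "cl_norm n (poly_fun n a k x) * weight n rh (\<sigma> + \<epsilon>) x \<le> K * (1 / q) ^ k + M" .
    qed
    hence "bdd_above ((\<lambda>x. cl_norm n (poly_fun n a k x) * weight n rh (\<sigma> + \<epsilon>) x) ` paravectors n)"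
      by (auto simp: bdd_above_def)
    thus "in_A n rh (\<sigma> + \<epsilon>) (poly_fun n a k)"
      using poly_slice_monogenic[OF ac] by (simp add: in_A_def)
  qed
  have lim: "(\<lambda>k. A_norm n rh (\<sigma> + \<epsilon>) (fun_diff (poly_fun n a k) f)) \<longlonglongrightarrow> 0" if e: "\<epsilon> > 0" for \<epsilon>
  proof -
    obtain K q M where q: "q > 1" and K: "\<forall>N. \<forall>x\<in>paravectors n.
      cl_norm n (fun_diff (poly_fun n a N) f x) * weight n rh (\<sigma> + \<epsilon>) x \<le> K * (1 / q) ^ N"
      using key[OF e] by blast
    have up: "A_norm n rh (\<sigma> + \<epsilon>) (fun_diff (poly_fun n a k) f) \<le> K * (1 / q) ^ k" for k
      unfolding A_norm_def
      by (rule cSUP_least) (use para_nonempty K in auto)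
    have lo: "0 \<le> A_norm n rh (\<sigma> + \<epsilon>) (fun_diff (poly_fun n a k) f)" for k
    proof -
      have bdd: "bdd_above ((\<lambda>x. cl_norm n (fun_diff (poly_fun n a k) f x) * weight n rh (\<sigma> + \<epsilon>) x) ` paravectors n)"
        using K by (auto simp: bdd_above_def)
      show ?thesis unfolding A_norm_def
        by (rule cSUP_upper2[OF bdd para_nonempty]) (simp add: cl_norm_nonneg weight_def)
    qed
    have "(\<lambda>k. K * (1 / q) ^ k) \<longlonglongrightarrow> K * 0"
      using q by (intro tendsto_mult tendsto_const LIMSEQ_power_zero) auto
    hence L: "(\<lambda>k. K * (1 / q) ^ k) \<longlonglongrightarrow> 0" by simp
    show ?thesis
      by (rule tendsto_sandwich[of "\<lambda>_. 0" "\<lambda>k. A_norm n rh (\<sigma> + \<epsilon>) (fun_diff (poly_fun n a k) f)"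
          sequentially "\<lambda>k. K * (1 / q) ^ k" 0]) (use lo up L in auto)
  qed
  show ?thesis unfolding conv_A_plus_def using polyA fA lim by blast
qed

lemma avg_lim:
  fixes P Q :: "nat \<Rightarrow> real"
  assumes "(\<lambda>N. P N + Q N) \<longlonglongrightarrow> X" "(\<lambda>N. P N - Q N) \<longlonglongrightarrow> Y"
  shows "(\<lambda>N. P N) \<longlonglongrightarrow> (X + Y) / 2" "(\<lambda>N. Q N) \<longlonglongrightarrow> (X - Y) / 2"
proof -
  have "(\<lambda>N. ((P N + Q N) + (P N - Q N)) / 2) \<longlonglongrightarrow> (X + Y) / 2"
    using assms by (intro tendsto_intros) auto
  thus "(\<lambda>N. P N) \<longlonglongrightarrow> (X + Y) / 2" by simp
  have "(\<lambda>N. ((P N + Q N) - (P N - Q N)) / 2) \<longlonglongrightarrow> (X - Y) / 2"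
    using assms by (intro tendsto_intros) auto
  thus "(\<lambda>N. Q N) \<longlonglongrightarrow> (X - Y) / 2" by simp
qed

lemma cl_mult_tendsto:
  assumes "\<And>B. (\<lambda>N. b N B) \<longlonglongrightarrow> L B"
  shows "(\<lambda>N. cl_mult n j (b N) C) \<longlonglongrightarrow> cl_mult n j L C"
  unfolding cl_mult_expand by (intro tendsto_intros assms)

lemma taylor_exists:
  assumes n: "n \<ge> 1" and sm: "slice_monogenic n g"
  shows "\<exists>a. (\<forall>l. a l \<in> clifford n) \<and> (\<forall>x\<in>paravectors n. \<forall>A. (\<lambda>N. poly_fun n a N x A) \<longlonglongrightarrow> g x A)"
proof -
  obtain f0 f1 D0u D0v D1u D1v :: "real \<times> real \<Rightarrow> cl" where
    cl: "\<forall>p. f0 p \<in> clifford n \<and> f1 p \<in> clifford n" and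
    d0: "\<forall>A p. ((\<lambda>q. f0 q A) has_derivative (\<lambda>(h, k). h * D0u p A + k * D0v p A)) (at p)" and
    d1: "\<forall>A p. ((\<lambda>q. f1 q A) has_derivative (\<lambda>(h, k). h * D1u p A + k * D1v p A)) (at p)" and
    sy: "\<forall>u v. f0 (u, - v) = f0 (u, v) \<and> f1 (u, - v) = cl_scale (-1) (f1 (u, v))" and
    cr: "\<forall>p. D0u p = D1v p \<and> D0v p = cl_scale (-1) (D1u p)" and
    rp: "\<forall>u v j. j \<in> cl_sphere n \<longrightarrow>
          g (cl_add (cl_real u) (cl_scale v j)) = cl_add (f0 (u, v)) (cl_mult n j (f1 (u, v)))"
    using sm unfolding slice_monogenic_def by metis
  define F where "F A z = Complex (f0 (Re z, Im z) A) (f1 (Re z, Im z) A)" for A z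
  have ri: "((\<lambda>w::complex. (Re w, Im w)) has_derivative (\<lambda>h. (Re h, Im h))) (at z)" for z
    by (auto intro!: derivative_eq_intros)
  have hol: "(F A has_field_derivative Complex (D0u (Re z, Im z) A) (D1u (Re z, Im z) A)) (at z)" for A z
  proof -
    define p where "p = (Re z, Im z)"
    have c0: "((\<lambda>w. f0 (Re w, Im w) A) has_derivative (\<lambda>h. Re h * D0u p A + Im h * D0v p A)) (at z)"
      using has_derivative_compose[OF ri, of "\<lambda>q. f0 q A" "\<lambda>(h, k). h * D0u p A + k * D0v p A"] d0
      by (simp add: p_def)
    have c1: "((\<lambda>w. f1 (Re w, Im w) A) has_derivative (\<lambda>h. Re h * D1u p A + Im h * D1v p A)) (at z)"
      using has_derivative_compose[OF ri, of "\<lambda>q. f1 q A" "\<lambda>(h, k). h * D1u p A + k * D1v p A"] d1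
      by (simp add: p_def)
    have Fe: "F A = (\<lambda>w. of_real (f0 (Re w, Im w) A) + \<i> * of_real (f1 (Re w, Im w) A))"
      by (auto simp: F_def Complex_eq)
    have "(F A has_derivative (\<lambda>h. of_real (Re h * D0u p A + Im h * D0v p A) + \<i> * of_real (Re h * D1u p A + Im h * D1v p A))) (at z)"
      unfolding Fe by (intro derivative_intros c0 c1)
    moreover have "(\<lambda>h. of_real (Re h * D0u p A + Im h * D0v p A) + \<i> * of_real (Re h * D1u p A + Im h * D1v p A))
        = (\<lambda>h. Complex (D0u p A) (D1u p A) * h)"
    proof
      fix h
      have crp: "D0u p = D1v p \<and> D0v p = cl_scale (-1) (D1u p)" using cr by blast
      have "D0v p A = - D1u p A" "D1v p A = D0u p A" using crp by (simp_all add: cl_scale_def)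
      thus "of_real (Re h * D0u p A + Im h * D0v p A) + \<i> * of_real (Re h * D1u p A + Im h * D1v p A)
          = Complex (D0u p A) (D1u p A) * h"
        by (simp add: complex_eq_iff algebra_simps)
    qed
    ultimately show ?thesis by (simp add: has_field_derivative_def p_def)
  qed
  have holo: "F A holomorphic_on UNIV" for A
    using hol by (auto simp: holomorphic_on_open)
  define c where "c l A = (deriv ^^ l) (F A) 0 / fact l" for l A
  define a where "a l A = Re (c l A)" for l A
  have sums: "(\<lambda>l. c l A * w ^ l) sums F A w" for A w
  proof -
    have "(\<lambda>l. (deriv ^^ l) (F A) 0 / fact l * (w - 0) ^ l) sums F A w"
    proof (rule holomorphic_power_series[of _ _ "cmod w + 1"])
      show "F A holomorphic_on ball 0 (cmod w + 1)" by (rule holomorphic_on_subset[OF holo]) simp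
    qed simp
    thus ?thesis by (simp add: c_def)
  qed
  have ac: "\<forall>l. a l \<in> clifford n"
  proof (intro allI, unfold clifford_def, intro CollectI allI impI, rule ccontr)
    fix l A assume ne: "a l A \<noteq> 0" and ns: "\<not> A \<subseteq> {1..n}"
    have "f0 p A = 0 \<and> f1 p A = 0" for p
    proof -
      have "f0 p \<in> clifford n" "f1 p \<in> clifford n" using spec[OF cl, of p] by simp_all
      thus ?thesis using ns unfolding clifford_def by blast
    qed
    hence "F A = (\<lambda>w. 0)" by (auto simp: F_def complex_eq_iff)
    hence "c l A = 0" by (simp add: c_def)
    thus False using ne by (simp add: a_def)
  qed
  have convg: "\<forall>x\<in>paravectors n. \<forall>C. (\<lambda>N. poly_fun n a N x C) \<longlonglongrightarrow> g x C"
  proof (intro ballI allI)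
    fix x C assume x: "x \<in> paravectors n"
    obtain u v j where js: "j \<in> cl_sphere n" and xe: "x = cl_add (cl_real u) (cl_scale v j)"
      using para_decomp[OF x n] by blast
    define z where "z = Complex u v"
    have parts: "(\<lambda>N. \<Sum>l\<le>N. Re (z ^ l) * a l B) \<longlonglongrightarrow> f0 (u, v) B \<and>
                 (\<lambda>N. \<Sum>l\<le>N. Im (z ^ l) * a l B) \<longlonglongrightarrow> f1 (u, v) B" for B
    proof -
      have s1: "(\<lambda>N. \<Sum>l\<le>N. c l B * Complex u v ^ l) \<longlonglongrightarrow> F B (Complex u v)"
        using sums[of B "Complex u v"] by (simp add: sums_def_le)
      have s2: "(\<lambda>N. \<Sum>l\<le>N. c l B * Complex u (-v) ^ l) \<longlonglongrightarrow> F B (Complex u (-v))"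
        using sums[of B "Complex u (-v)"] by (simp add: sums_def_le)
      have r1: "(\<lambda>N. (\<Sum>l\<le>N. Re (z ^ l) * a l B) - (\<Sum>l\<le>N. Im (z ^ l) * Im (c l B))) \<longlonglongrightarrow> f0 (u, v) B"
        using tendsto_Re[OF s1] by (simp add: F_def z_def a_def sum_subtractf algebra_simps)
      have r2: "(\<lambda>N. (\<Sum>l\<le>N. Re (z ^ l) * a l B) + (\<Sum>l\<le>N. Im (z ^ l) * Im (c l B))) \<longlonglongrightarrow> f0 (u, v) B"
        using tendsto_Re[OF s2] sy by (simp add: F_def z_def a_def cnj_pow_parts sum.distrib algebra_simps)
      have i1: "(\<lambda>N. (\<Sum>l\<le>N. Re (z ^ l) * Im (c l B)) + (\<Sum>l\<le>N. Im (z ^ l) * a l B)) \<longlonglongrightarrow> f1 (u, v) B"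
        using tendsto_Im[OF s1] by (simp add: F_def z_def a_def sum.distrib algebra_simps)
      have i2: "(\<lambda>N. (\<Sum>l\<le>N. Re (z ^ l) * Im (c l B)) - (\<Sum>l\<le>N. Im (z ^ l) * a l B)) \<longlonglongrightarrow> - f1 (u, v) B"
        using tendsto_Im[OF s2] sy by (simp add: F_def z_def a_def cnj_pow_parts sum_subtractf cl_scale_def algebra_simps)
      have "(\<lambda>N. \<Sum>l\<le>N. Re (z ^ l) * a l B) \<longlonglongrightarrow> (f0 (u, v) B + f0 (u, v) B) / 2"
        by (rule avg_lim(1)[OF r2 r1])
      moreover have "(\<lambda>N. \<Sum>l\<le>N. Im (z ^ l) * a l B) \<longlonglongrightarrow> (f1 (u, v) B - - f1 (u, v) B) / 2"
        by (rule avg_lim(2)[OF i1 i2])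
      ultimately show ?thesis by simp
    qed
    have "(\<lambda>N. (\<Sum>l\<le>N. Re (z ^ l) * a l C) + cl_mult n j (\<lambda>B. \<Sum>l\<le>N. Im (z ^ l) * a l B) C)
        \<longlonglongrightarrow> f0 (u, v) C + cl_mult n j (f1 (u, v)) C"
      using parts by (intro tendsto_add cl_mult_tendsto) auto
    moreover have "poly_fun n a N x C = (\<Sum>l\<le>N. Re (z ^ l) * a l C) + cl_mult n j (\<lambda>B. \<Sum>l\<le>N. Im (z ^ l) * a l B) C" for N
      unfolding xe z_def by (rule poly_slice[OF js ac])
    moreover have "g x C = f0 (u, v) C + cl_mult n j (f1 (u, v)) C"
      using rp js by (simp add: xe cl_add_def)
    ultimately show "(\<lambda>N. poly_fun n a N x C) \<longlonglongrightarrow> g x C" by simp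
  qed
  show ?thesis using ac convg by blast
qed

theorem proposition3p12:
  fixes n :: nat and rh :: "real \<Rightarrow> real" and \<rho> \<sigma> :: real
    and f :: "cl \<Rightarrow> cl" and a :: "nat \<Rightarrow> cl"
  assumes "n \<ge> 1"
    and "proximate_order rh \<rho>"
    and "\<sigma> \<ge> 0"
    and "in_A_plus n rh \<sigma> f"
    and "\<forall>l. a l \<in> clifford n"
    and "\<forall>x\<in>paravectors n. \<forall>A. (\<lambda>N. poly_fun n a N x A) \<longlonglongrightarrow> f x A"
  shows "conv_A_plus n rh \<sigma> (poly_fun n a) f
    \<and> (\<forall>g. in_A_plus n rh 0 g \<longrightarrow> (\<exists>p. (\<forall>k. is_cl_poly n (p k)) \<and> conv_A_plus n rh 0 p g))
    \<and> (\<forall>g. in_A_union n rh g \<longrightarrow> (\<exists>p. (\<forall>k. is_cl_poly n (p k)) \<and> conv_A_union n rh p g))"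
proof -
  note n = assms(1) and po = assms(2)
  have c1: "conv_A_plus n rh \<sigma> (poly_fun n a) f" by (rule part1[OF assms])
  have polys: "\<forall>k. is_cl_poly n (poly_fun n b k)" if "\<forall>l. b l \<in> clifford n" for b
    using that by (auto simp: is_cl_poly_def)
  have c2: "\<forall>g. in_A_plus n rh 0 g \<longrightarrow> (\<exists>p. (\<forall>k. is_cl_poly n (p k)) \<and> conv_A_plus n rh 0 p g)"
  proof (intro allI impI)
    fix g assume g: "in_A_plus n rh 0 g"
    have "in_A n rh (0 + 1) g" using g unfolding in_A_plus_def by simp
    hence sm: "slice_monogenic n g" by (simp add: in_A_def)
    obtain b where b1: "\<forall>l. b l \<in> clifford n"
      and b2: "\<forall>x\<in>paravectors n. \<forall>A. (\<lambda>N. poly_fun n b N x A) \<longlonglongrightarrow> g x A"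
      using taylor_exists[OF n sm] by blast
    have "conv_A_plus n rh 0 (poly_fun n b) g" by (rule part1[OF n po _ g b1 b2]) simp
    thus "\<exists>p. (\<forall>k. is_cl_poly n (p k)) \<and> conv_A_plus n rh 0 p g" using polys[OF b1] by blast
  qed
  have c3: "\<forall>g. in_A_union n rh g \<longrightarrow> (\<exists>p. (\<forall>k. is_cl_poly n (p k)) \<and> conv_A_union n rh p g)"
  proof (intro allI impI)
    fix g assume g: "in_A_union n rh g"
    then obtain s where s: "s > 0" and gs: "in_A n rh s g" by (auto simp: in_A_union_def)
    have gp: "in_A_plus n rh s g" unfolding in_A_plus_def
      using in_A_mono[OF gs] by simp
    hence sm: "slice_monogenic n g" using s by (auto simp: in_A_def in_A_plus_def)
    obtain b where b1: "\<forall>l. b l \<in> clifford n"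
      and b2: "\<forall>x\<in>paravectors n. \<forall>A. (\<lambda>N. poly_fun n b N x A) \<longlonglongrightarrow> g x A"
      using taylor_exists[OF n sm] by blast
    have cv: "conv_A_plus n rh s (poly_fun n b) g" by (rule part1[OF n po _ gp b1 b2]) (use s in simp)
    have "conv_A_union n rh (poly_fun n b) g"
      unfolding conv_A_union_def
    proof (rule exI[of _ "s + s"], intro conjI allI)
      show "s + s > 0" using s by simp
      fix k show "in_A n rh (s + s) (poly_fun n b k)" using cv s unfolding conv_A_plus_def in_A_plus_def by blast
    next
      show "in_A n rh (s + s) g" using gp s unfolding in_A_plus_def by blast
      show "(\<lambda>k. A_norm n rh (s + s) (fun_diff (poly_fun n b k) g)) \<longlonglongrightarrow> 0"
        using cv s unfolding conv_A_plus_def by blast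
    qed
    thus "\<exists>p. (\<forall>k. is_cl_poly n (p k)) \<and> conv_A_union n rh p g" using polys[OF b1] by blast
  qed
  show ?thesis using c1 c2 c3 by blast
qed

end
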